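(* With $D$, $\star$, $D_1=D[X]$ and $[\star]$ as defined in the context, $\mathrm{QMax}^{[\star]}(D_1)=\{Q_1\in\mathrm{Spec}(D_1)\mid Q_1\cap D=(0)\text{ and }\mathrm{c}_D(Q_1)^{\star_f}=D^\star\}\cup\{P[X]\mid P\in\mathrm{QMax}^{\star_f}(D)\}$.
   Context: $D$ is an integral domain with quotient field $K$, $X,Y$ indeterminates, $\star$ a semistar operation on $D$, $D_1:=D[X]$, $K_1:=K(X)$. $\overline{\boldsymbol F}(A)$ is the set of nonzero $A$-submodules of the quotient field of $A$. A semistar operation on $A$ is a map $\star:\overline{\boldsymbol F}(A)\to\overline{\boldsymbol F}(A)$ with $(xE)^\star=xE^\star$ for nonzero $x$ in the quotient field, $E\subseteq F\Rightarrow E^\star\subseteq F^\star$, $E\subseteq E^\star$, $(E^\star)^\star=E^\star$. $E^{\star_f}=\bigcup\{F^\star\mid F\subseteq E,\ F$ nonzero finitely generated fractional ideal$\}$. A nonzero ideal $I$ of $A$ is a quasi-$\star$-ideal if $I^\star\cap A=I$; $\mathrm{QMax}^\star(A)$ is the set of maximal elements among proper quasi-$\star$-ideals. $\mathrm{c}_D(Q_1)$ is the ideal of $D$ generated by all coefficients of all polynomials in $Q_1$. $\boldsymbol\Delta_1^\star:=\{Q_1\in\mathrm{Spec}(D_1)\mid Q_1\cap D=(0),\ \text{or } Q_1=(Q_1\cap D)[X]\text{ and }(Q_1\cap D)^{\star_f}\subsetneq D^\star\}$; $\mathcal S_1^\star:=D_1[Y]\setminus\bigcup\{Q_1[Y]\mid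 Q_1\in\boldsymbol\Delta_1^\star\}$; $[\star]$ is the semistar operation on $D_1$ given by $E^{[\star]}:=E[Y]_{\mathcal S_1^\star}\cap K_1$, where $E[Y]_{\mathcal S_1^\star}$ is the $D_1[Y]_{\mathcal S_1^\star}$-submodule of $K(X,Y)$ generated by $E$. *)

theory Defs
  imports "HOL-Computational_Algebra.Polynomial" "HOL-Computational_Algebra.Fraction_Field"
begin

text \<open>All rings are represented as subrings R of an ambient field 'f, which plays
the role of the quotient field of R.\<close>

definition emb :: "'a::idom \<Rightarrow> 'a fract" where
  "emb a = Fract a 1"

definition subring_of :: "'f::field set \<Rightarrow> bool" where
  "subring_of R \<longleftrightarrow> 0 \<in> R \<and> 1 \<in> R \<and> (\<forall>x\<in>R. \<forall>y\<in>R. x + y \<in> R \<and> x * y \<in> R \<and> - x \<in> R)"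

definition is_quotient_field_of :: "'f::field set \<Rightarrow> bool" where
  "is_quotient_field_of R \<longleftrightarrow> (\<forall>x. \<exists>a\<in>R. \<exists>b\<in>R. b \<noteq> 0 \<and> x = a / b)"

definition submod :: "'f::field set \<Rightarrow> 'f set \<Rightarrow> bool" where
  "submod R E \<longleftrightarrow> 0 \<in> E \<and> E \<noteq> {0} \<and> (\<forall>x\<in>E. \<forall>y\<in>E. x + y \<in> E) \<and> (\<forall>r\<in>R. \<forall>x\<in>E. r * x \<in> E)"

definition gen :: "'f::field set \<Rightarrow> 'f set \<Rightarrow> 'f set" where
  "gen R S = {(\<Sum>s\<in>T. c s * s) | T c. finite T \<and> T \<subseteq> S \<and> (\<forall>s\<in>T. c s \<in> R)}"

definition semistar :: "'f::field set \<Rightarrow> ('f set \<Rightarrow> 'f set) \<Rightarrow> bool" where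
  "semistar R st \<longleftrightarrow>
     (\<forall>E. submod R E \<longrightarrow> submod R (st E)) \<and>
     (\<forall>E x. submod R E \<longrightarrow> x \<noteq> 0 \<longrightarrow> st ((\<lambda>e. x * e) ` E) = (\<lambda>e. x * e) ` st E) \<and>
     (\<forall>E F. submod R E \<longrightarrow> submod R F \<longrightarrow> E \<subseteq> F \<longrightarrow> st E \<subseteq> st F) \<and>
     (\<forall>E. submod R E \<longrightarrow> E \<subseteq> st E) \<and>
     (\<forall>E. submod R E \<longrightarrow> st (st E) = st E)"

definition fg_frac :: "'f::field set \<Rightarrow> 'f set \<Rightarrow> bool" where
  "fg_frac R F \<longleftrightarrow> (\<exists>S. finite S \<and> F = gen R S) \<and> F \<noteq> {0}"

definition star_f :: "'f::field set \<Rightarrow> ('f set \<Rightarrow> 'f set) \<Rightarrow> 'f set \<Rightarrow> 'f set" where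
  "star_f R st E = \<Union>{st F | F. fg_frac R F \<and> F \<subseteq> E}"

definition is_ideal :: "'f::field set \<Rightarrow> 'f set \<Rightarrow> bool" where
  "is_ideal R I \<longleftrightarrow> I \<subseteq> R \<and> 0 \<in> I \<and> (\<forall>x\<in>I. \<forall>y\<in>I. x + y \<in> I) \<and> (\<forall>r\<in>R. \<forall>x\<in>I. r * x \<in> I)"

definition Spec :: "'f::field set \<Rightarrow> 'f set set" where
  "Spec R = {P. is_ideal R P \<and> P \<noteq> R \<and> (\<forall>a\<in>R. \<forall>b\<in>R. a * b \<in> P \<longrightarrow> a \<in> P \<or> b \<in> P)}"

definition quasi_ideal :: "'f::field set \<Rightarrow> ('f set \<Rightarrow> 'f set) \<Rightarrow> 'f set \<Rightarrow> bool" where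
  "quasi_ideal R st I \<longleftrightarrow> is_ideal R I \<and> I \<noteq> {0} \<and> st I \<inter> R = I"

definition QMax :: "'f::field set \<Rightarrow> ('f set \<Rightarrow> 'f set) \<Rightarrow> 'f set set" where
  "QMax R st = {I. quasi_ideal R st I \<and> I \<noteq> R \<and>
      (\<forall>J. quasi_ideal R st J \<and> J \<noteq> R \<and> I \<subseteq> J \<longrightarrow> J = I)}"

text \<open>D_1 = D[X] inside K_1 = K(X) (= 'k poly fract).\<close>
definition polys_over :: "'a::zero set \<Rightarrow> 'a poly set" where
  "polys_over A = {p. \<forall>i. coeff p i \<in> A}"

definition D1 :: "'k::field set \<Rightarrow> 'k poly fract set" where
  "D1 D = emb ` polys_over D"

definition embK :: "'k::field \<Rightarrow> 'k poly fract" where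
  "embK d = emb [:d:]"

definition contr :: "'k::field set \<Rightarrow> 'k poly fract set \<Rightarrow> 'k set" where
  "contr D Q = {d \<in> D. embK d \<in> Q}"

definition extX :: "'k::field set \<Rightarrow> 'k poly fract set" where
  "extX I = emb ` polys_over I"

definition content_ideal :: "'k::field set \<Rightarrow> 'k poly fract set \<Rightarrow> 'k set" where
  "content_ideal D Q = gen D {coeff p i | p i. emb p \<in> Q}"

definition Delta1 :: "'k::field set \<Rightarrow> ('k set \<Rightarrow> 'k set) \<Rightarrow> 'k poly fract set set" where
  "Delta1 D st = {Q \<in> Spec (D1 D). contr D Q = {0} \<or>
      (Q = extX (contr D Q) \<and> star_f D st (contr D Q) \<subset> st D)}"

text \<open>S_1 inside D_1[Y] (= polynomials over K(X) with coefficients in D_1)\<close>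
definition S1 :: "'k::field set \<Rightarrow> ('k set \<Rightarrow> 'k set) \<Rightarrow> 'k poly fract poly set" where
  "S1 D st = polys_over (D1 D) - \<Union>{polys_over Q | Q. Q \<in> Delta1 D st}"

text \<open>D_1[Y]_{S_1} inside K(X,Y) = ('k poly fract) poly fract\<close>
definition D1Y_loc :: "'k::field set \<Rightarrow> ('k set \<Rightarrow> 'k set) \<Rightarrow> 'k poly fract poly fract set" where
  "D1Y_loc D st = {emb f / emb s | f s. f \<in> polys_over (D1 D) \<and> s \<in> S1 D st}"

text \<open>E^{[star]} = E[Y]_{S_1} \<inter> K_1\<close>
definition bracket_star :: "'k::field set \<Rightarrow> ('k set \<Rightarrow> 'k set) \<Rightarrow> 'k poly fract set \<Rightarrow> 'k poly fract set" where
  "bracket_star D st E = {a. emb [:a:] \<in> gen (D1Y_loc D st) ((\<lambda>e. emb [:e:]) ` E)}"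

end

theory Submission
  imports Defs
begin

lemma emb_mult: "emb (a * b) = emb a * emb b" by (simp add: emb_def)
lemma emb_add: "emb (a + b) = emb a + emb b" by (simp add: emb_def)
lemma emb_uminus: "emb (- a) = - emb a" by (simp add: emb_def)
lemma emb_0[simp]: "emb 0 = 0" by (simp add: emb_def Zero_fract_def)
lemma emb_1[simp]: "emb 1 = 1" by (simp add: emb_def One_fract_def)
lemma emb_inj[simp]: "emb a = emb b \<longleftrightarrow> a = b" by (simp add: emb_def eq_fract)
lemma emb_eq_0[simp]: "emb a = 0 \<longleftrightarrow> a = 0" using emb_inj[of a 0] by simp
lemma emb_sum: "emb (sum f A) = (\<Sum>x\<in>A. emb (f x))"
  by (induction A rule: infinite_finite_induct) (auto simp: emb_add)
lemma emb_prod: "emb (prod f A) = (\<Prod>x\<in>A. emb (f x))"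
  by (induction A rule: infinite_finite_induct) (auto simp: emb_mult)

lemma genI: "finite T \<Longrightarrow> T \<subseteq> S \<Longrightarrow> (\<forall>s\<in>T. c s \<in> R) \<Longrightarrow> (\<Sum>s\<in>T. c s * s) \<in> gen R S"
  unfolding gen_def by blast

lemma genE: assumes "x \<in> gen R S"
  obtains T c where "finite T" "T \<subseteq> S" "\<forall>s\<in>T. c s \<in> R" "x = (\<Sum>s\<in>T. c s * s)"
  using assms unfolding gen_def by blast

lemma gen_0: "0 \<in> gen R S"
  using genI[of "{}" S] by simp

lemma gen_add:
  assumes R0: "0 \<in> R" and Radd: "\<forall>x\<in>R. \<forall>y\<in>R. x + y \<in> R"
    and x: "x \<in> gen R S" and y: "y \<in> gen R S"
  shows "x + y \<in> gen R S"
proof -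
  obtain T1 c1 where T1: "finite T1" "T1 \<subseteq> S" "\<forall>s\<in>T1. c1 s \<in> R" "x = (\<Sum>s\<in>T1. c1 s * s)"
    using x by (rule genE)
  obtain T2 c2 where T2: "finite T2" "T2 \<subseteq> S" "\<forall>s\<in>T2. c2 s \<in> R" "y = (\<Sum>s\<in>T2. c2 s * s)"
    using y by (rule genE)
  define c where "c s = (if s \<in> T1 then c1 s else 0) + (if s \<in> T2 then c2 s else 0)" for s
  have fin: "finite (T1 \<union> T2)" using T1 T2 by simp
  have "(\<Sum>s\<in>T1 \<union> T2. c s * s) = (\<Sum>s\<in>T1 \<union> T2. (if s \<in> T1 then c1 s * s else 0))
          + (\<Sum>s\<in>T1 \<union> T2. (if s \<in> T2 then c2 s * s else 0))"
    unfolding c_def sum.distrib[symmetric] by (intro sum.cong) (auto simp: distrib_right)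
  also have "\<dots> = x + y"
    proof -
    have a: "(\<Sum>s\<in>T1 \<union> T2. (if s \<in> T1 then c1 s * s else 0)) = (\<Sum>s\<in>(T1 \<union> T2) \<inter> T1. c1 s * s)"
      by (rule sum.inter_restrict[OF fin, symmetric])
    have b: "(\<Sum>s\<in>T1 \<union> T2. (if s \<in> T2 then c2 s * s else 0)) = (\<Sum>s\<in>(T1 \<union> T2) \<inter> T2. c2 s * s)"
      by (rule sum.inter_restrict[OF fin, symmetric])
    show ?thesis unfolding a b T1(4) T2(4) by (simp add: Int_absorb1 Int_absorb2)
  qed
  finally have eq: "(\<Sum>s\<in>T1 \<union> T2. c s * s) = x + y" .
  have cR: "\<forall>s\<in>T1 \<union> T2. c s \<in> R"
    using T1(3) T2(3) R0 Radd unfolding c_def by auto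
  have "T1 \<union> T2 \<subseteq> S" using T1(2) T2(2) by auto
  from genI[OF fin this cR] show ?thesis using eq by simp
qed

lemma gen_single: "s \<in> S \<Longrightarrow> r \<in> R \<Longrightarrow> r * s \<in> gen R S"
  using genI[of "{s}" S "\<lambda>_. r" R] by simp

lemma gen_base: "s \<in> S \<Longrightarrow> 1 \<in> R \<Longrightarrow> s \<in> gen R S"
  using gen_single[of s S 1 R] by simp

lemma gen_sum:
  assumes R0: "0 \<in> R" and Radd: "\<forall>x\<in>R. \<forall>y\<in>R. x + y \<in> R"
  shows "finite T \<Longrightarrow> (\<forall>t\<in>T. c t \<in> R \<and> g t \<in> S) \<Longrightarrow> (\<Sum>t\<in>T. c t * g t) \<in> gen R S"
proof (induction T rule: finite_induct)
  case empty then show ?case by (simp add: gen_0)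
next
  case (insert t T)
  then show ?case by (auto intro!: gen_add[OF R0 Radd] gen_single)
qed

lemma sum_closed:
  assumes "0 \<in> M" "\<forall>x\<in>M. \<forall>y\<in>M. x + y \<in> M"
  shows "(\<forall>x\<in>A. f x \<in> M) \<Longrightarrow> sum f A \<in> M"
  using assms by (induction A rule: infinite_finite_induct) auto

lemma gen_least:
  assumes "0 \<in> M" "\<forall>x\<in>M. \<forall>y\<in>M. x + y \<in> M" "\<forall>r\<in>R. \<forall>x\<in>M. r * x \<in> M" "S \<subseteq> M"
  shows "gen R S \<subseteq> M"
proof
  fix x assume "x \<in> gen R S"
  then obtain T c where T: "finite T" "T \<subseteq> S" "\<forall>s\<in>T. c s \<in> R" "x = (\<Sum>s\<in>T. c s * s)"
    by (rule genE)
  show "x \<in> M" unfolding T(4) using assms T by (intro sum_closed) auto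
qed

lemma gen_mono: "S \<subseteq> S' \<Longrightarrow> gen R S \<subseteq> gen R S'"
  unfolding gen_def by blast

lemma gen_smult:
  assumes "subring_of R" "r \<in> R" "x \<in> gen R S"
  shows "r * x \<in> gen R S"
proof -
  obtain T c where T: "finite T" "T \<subseteq> S" "\<forall>s\<in>T. c s \<in> R" "x = (\<Sum>s\<in>T. c s * s)"
    using assms(3) by (rule genE)
  have "r * x = (\<Sum>s\<in>T. (r * c s) * s)" unfolding T(4) by (simp add: sum_distrib_left mult.assoc)
  moreover have "\<forall>s\<in>T. r * c s \<in> R" using assms(1,2) T(3) unfolding subring_of_def by auto
  ultimately show ?thesis using genI[OF T(1,2)] by auto
qed

lemma subring_add: "subring_of R \<Longrightarrow> \<forall>x\<in>R. \<forall>y\<in>R. x + y \<in> R"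
  unfolding subring_of_def by auto
lemma subring_0: "subring_of R \<Longrightarrow> 0 \<in> R"
  unfolding subring_of_def by auto
lemma subring_1: "subring_of R \<Longrightarrow> 1 \<in> R"
  unfolding subring_of_def by auto
lemma subring_mult: "subring_of R \<Longrightarrow> x \<in> R \<Longrightarrow> y \<in> R \<Longrightarrow> x * y \<in> R"
  unfolding subring_of_def by auto
lemma subring_uminus: "subring_of R \<Longrightarrow> x \<in> R \<Longrightarrow> - x \<in> R"
  unfolding subring_of_def by auto
lemma subring_diff: "subring_of R \<Longrightarrow> x \<in> R \<Longrightarrow> y \<in> R \<Longrightarrow> x - y \<in> R"
  unfolding subring_of_def by (metis diff_conv_add_uminus)

lemma gen_closed:
  assumes "subring_of R"
  shows "0 \<in> gen R S" "\<forall>x\<in>gen R S. \<forall>y\<in>gen R S. x + y \<in> gen R S" "\<forall>r\<in>R. \<forall>x\<in>gen R S. r * x \<in> gen R S"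
  using gen_0 gen_add[OF subring_0[OF assms] subring_add[OF assms]] gen_smult[OF assms] by auto

lemma gen_gen: "subring_of R \<Longrightarrow> gen R (gen R S) = gen R S"
  apply (rule antisym)
   apply (rule gen_least[OF gen_closed]; simp)
  apply (rule gen_mono)
  using gen_base subring_1 by blast

lemma gen_subset_ideal: "is_ideal R I \<Longrightarrow> S \<subseteq> I \<Longrightarrow> gen R S \<subseteq> I"
  unfolding is_ideal_def by (intro gen_least) auto

lemma submod_gen: "subring_of R \<Longrightarrow> s \<in> S \<Longrightarrow> s \<noteq> 0 \<Longrightarrow> submod R (gen R S)"
  unfolding submod_def using gen_closed[of R S] gen_base[of s S R] subring_1 by fastforce

lemma ideal_sub: "is_ideal R I \<Longrightarrow> I \<subseteq> R" unfolding is_ideal_def by auto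
lemma ideal_0: "is_ideal R I \<Longrightarrow> 0 \<in> I" unfolding is_ideal_def by auto
lemma ideal_add: "is_ideal R I \<Longrightarrow> x \<in> I \<Longrightarrow> y \<in> I \<Longrightarrow> x + y \<in> I" unfolding is_ideal_def by auto
lemma ideal_mult: "is_ideal R I \<Longrightarrow> r \<in> R \<Longrightarrow> x \<in> I \<Longrightarrow> r * x \<in> I" unfolding is_ideal_def by auto
lemma ideal_mult2: "is_ideal R I \<Longrightarrow> r \<in> R \<Longrightarrow> x \<in> I \<Longrightarrow> x * r \<in> I"
  using ideal_mult by (metis mult.commute)
lemma ideal_uminus: "subring_of R \<Longrightarrow> is_ideal R I \<Longrightarrow> x \<in> I \<Longrightarrow> - x \<in> I"
  using ideal_mult[of R I "-1" x] subring_uminus[OF _ subring_1] by auto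
lemma ideal_diff: "subring_of R \<Longrightarrow> is_ideal R I \<Longrightarrow> x \<in> I \<Longrightarrow> y \<in> I \<Longrightarrow> x - y \<in> I"
  by (metis diff_conv_add_uminus ideal_add ideal_uminus)
lemma ideal_sum: "is_ideal R I \<Longrightarrow> (\<forall>x\<in>A. f x \<in> I) \<Longrightarrow> sum f A \<in> I"
  by (rule sum_closed) (auto simp: ideal_0 ideal_add)
lemma ideal_one: "is_ideal R I \<Longrightarrow> 1 \<in> I \<Longrightarrow> I = R"
  using ideal_mult[of R I _ 1] ideal_sub by fastforce


locale ssr =
  fixes R :: "'f::field set" and st :: "'f set \<Rightarrow> 'f set"
  assumes sr: "subring_of R" and ss: "semistar R st"
begin

lemma ss_all: "(\<forall>E. submod R E \<longrightarrow> submod R (st E)) \<and>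
     (\<forall>E x. submod R E \<longrightarrow> x \<noteq> 0 \<longrightarrow> st ((\<lambda>e. x * e) ` E) = (\<lambda>e. x * e) ` st E) \<and>
     (\<forall>E F. submod R E \<longrightarrow> submod R F \<longrightarrow> E \<subseteq> F \<longrightarrow> st E \<subseteq> st F) \<and>
     (\<forall>E. submod R E \<longrightarrow> E \<subseteq> st E) \<and>
     (\<forall>E. submod R E \<longrightarrow> st (st E) = st E)"
  using ss unfolding semistar_def .

lemma st_submod: "submod R E \<Longrightarrow> submod R (st E)"
  using ss_all[THEN conjunct1] by simp
lemma st_scale: "submod R E \<Longrightarrow> x \<noteq> 0 \<Longrightarrow> st ((\<lambda>e. x * e) ` E) = (\<lambda>e. x * e) ` st E"
  using ss_all[THEN conjunct2, THEN conjunct1] by simp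
lemma st_mono: "submod R E \<Longrightarrow> submod R F \<Longrightarrow> E \<subseteq> F \<Longrightarrow> st E \<subseteq> st F"
  using ss_all[THEN conjunct2, THEN conjunct2, THEN conjunct1] by simp
lemma st_ext: "submod R E \<Longrightarrow> E \<subseteq> st E"
  using ss_all[THEN conjunct2, THEN conjunct2, THEN conjunct2, THEN conjunct1] by simp
lemma st_idem: "submod R E \<Longrightarrow> st (st E) = st E"
  using ss_all[THEN conjunct2, THEN conjunct2, THEN conjunct2, THEN conjunct2] by simp

lemma submod_0: "submod R E \<Longrightarrow> 0 \<in> E" unfolding submod_def by auto
lemma submod_add: "submod R E \<Longrightarrow> x \<in> E \<Longrightarrow> y \<in> E \<Longrightarrow> x + y \<in> E" unfolding submod_def by auto
lemma submod_mult: "submod R E \<Longrightarrow> r \<in> R \<Longrightarrow> x \<in> E \<Longrightarrow> r * x \<in> E" unfolding submod_def by auto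

lemma R_submod: "submod R R"
proof -
  have "R \<noteq> {0}" using subring_1[OF sr] by (metis one_neq_zero singletonD)
  then show ?thesis using sr unfolding submod_def subring_of_def by blast
qed

lemma fg_frac_submod: "fg_frac R F \<Longrightarrow> submod R F"
proof -
  assume "fg_frac R F"
  then obtain S where S: "finite S" "F = gen R S" "F \<noteq> {0}" unfolding fg_frac_def by blast
  have "\<exists>s\<in>S. s \<noteq> 0"
  proof (rule ccontr)
    assume "\<not> ?thesis"
    then have "S \<subseteq> {0}" by blast
    then have "gen R S \<subseteq> {0}" by (intro gen_least) auto
    then show False using S gen_0[of R S] by blast
  qed
  then obtain s where "s \<in> S" "s \<noteq> 0" by blast
  then show ?thesis using submod_gen[OF sr] S(2) by blast
qed

lemma star_fI: "fg_frac R F \<Longrightarrow> F \<subseteq> E \<Longrightarrow> x \<in> st F \<Longrightarrow> x \<in> star_f R st E"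
  unfolding star_f_def by blast
lemma star_fE: "x \<in> star_f R st E \<Longrightarrow> (\<And>F. fg_frac R F \<Longrightarrow> F \<subseteq> E \<Longrightarrow> x \<in> st F \<Longrightarrow> thesis) \<Longrightarrow> thesis"
  unfolding star_f_def by blast
lemma star_f_mono: "E \<subseteq> E' \<Longrightarrow> star_f R st E \<subseteq> star_f R st E'"
  unfolding star_f_def by blast

lemma star_f_le: "E \<subseteq> R \<Longrightarrow> star_f R st E \<subseteq> st R"
proof
  fix x assume "E \<subseteq> R" "x \<in> star_f R st E"
  then obtain F where F: "fg_frac R F" "F \<subseteq> E" "x \<in> st F" by (auto elim: star_fE)
  have "st F \<subseteq> st R" using st_mono[OF fg_frac_submod[OF F(1)] R_submod] F(2) \<open>E \<subseteq> R\<close> by blast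
  then show "x \<in> st R" using F(3) by blast
qed

lemma one_st: "submod R G \<Longrightarrow> 1 \<in> st G \<Longrightarrow> st R \<subseteq> st G"
proof -
  assume G: "submod R G" and 1: "1 \<in> st G"
  have "R \<subseteq> st G"
  proof
    fix r assume "r \<in> R"
    from submod_mult[OF st_submod[OF G] this 1] show "r \<in> st G" by simp
  qed
  then have "st R \<subseteq> st (st G)" by (intro st_mono R_submod st_submod G)
  then show ?thesis using st_idem[OF G] by simp
qed

lemma fg_combine:
  assumes E: "is_ideal R E" and G1: "fg_frac R G1" "G1 \<subseteq> E" and G2: "fg_frac R G2" "G2 \<subseteq> E"
  shows "\<exists>G. fg_frac R G \<and> G \<subseteq> E \<and> G1 \<subseteq> G \<and> G2 \<subseteq> G"
proof -
  obtain S1 where S1: "finite S1" "G1 = gen R S1" "G1 \<noteq> {0}" using G1 unfolding fg_frac_def by auto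
  obtain S2 where S2: "finite S2" "G2 = gen R S2" using G2 unfolding fg_frac_def by auto
  have sub1: "G1 \<subseteq> gen R (S1 \<union> S2)" "G2 \<subseteq> gen R (S1 \<union> S2)"
    using S1(2) S2(2) gen_mono[of S1 "S1 \<union> S2" R] gen_mono[of S2 "S1 \<union> S2" R] by auto
  have "S1 \<subseteq> gen R S1" "S2 \<subseteq> gen R S2" using gen_base[OF _ subring_1[OF sr]] by auto
  then have "S1 \<union> S2 \<subseteq> E" using S1(2) S2(2) G1(2) G2(2) by auto
  then have "gen R (S1 \<union> S2) \<subseteq> E" by (rule gen_subset_ideal[OF E])
  moreover have "gen R (S1 \<union> S2) \<noteq> {0}" using sub1(1) S1(3) S1(2) gen_0[of R S1] by blast
  then have "fg_frac R (gen R (S1 \<union> S2))"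
    unfolding fg_frac_def using S1(1) S2(1) by blast
  ultimately show ?thesis using sub1 by blast
qed

lemma fg_single: "x \<noteq> 0 \<Longrightarrow> fg_frac R (gen R {x})"
proof -
  assume x: "x \<noteq> 0"
  have "x \<in> gen R {x}" using gen_base[of x "{x}" R] subring_1[OF sr] by simp
  then have "gen R {x} \<noteq> {0}" using x by blast
  then show ?thesis unfolding fg_frac_def by blast
qed

lemma fg_exists: "is_ideal R E \<Longrightarrow> E \<noteq> {0} \<Longrightarrow> \<exists>G. fg_frac R G \<and> G \<subseteq> E"
proof -
  assume E: "is_ideal R E" "E \<noteq> {0}"
  then obtain x where x: "x \<in> E" "x \<noteq> 0" using ideal_0 by blast
  have "gen R {x} \<subseteq> E" using gen_subset_ideal[OF E(1)] x by blast
  then show ?thesis using fg_single[OF x(2)] by blast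
qed

lemma finite_in_star_f:
  assumes E: "is_ideal R E" "E \<noteq> {0}"
  shows "finite A \<Longrightarrow> A \<subseteq> star_f R st E \<Longrightarrow> \<exists>G. fg_frac R G \<and> G \<subseteq> E \<and> A \<subseteq> st G"
proof (induction A rule: finite_induct)
  case empty then show ?case using fg_exists[OF E] by blast
next
  case (insert x A)
  then obtain G1 where G1: "fg_frac R G1" "G1 \<subseteq> E" "A \<subseteq> st G1" by auto
  from insert obtain F where F: "fg_frac R F" "F \<subseteq> E" "x \<in> st F" by (auto elim: star_fE)
  obtain G where G: "fg_frac R G" "G \<subseteq> E" "G1 \<subseteq> G" "F \<subseteq> G" using fg_combine[OF E(1) G1(1,2) F(1,2)] by blast
  have "st G1 \<subseteq> st G" using st_mono[OF fg_frac_submod[OF G1(1)] fg_frac_submod[OF G(1)] G(3)] .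
  moreover have "st F \<subseteq> st G" using st_mono[OF fg_frac_submod[OF F(1)] fg_frac_submod[OF G(1)] G(4)] .
  ultimately have "insert x A \<subseteq> st G" using G1(3) F(3) by blast
  then show ?case using G(1,2) by blast
qed

lemma ideal_sub_star_f: "is_ideal R E \<Longrightarrow> E \<noteq> {0} \<Longrightarrow> E \<subseteq> star_f R st E"
proof
  fix x assume E: "is_ideal R E" "E \<noteq> {0}" and x: "x \<in> E"
  show "x \<in> star_f R st E"
  proof (cases "x = 0")
    case True
    obtain G where "fg_frac R G" "G \<subseteq> E" using fg_exists[OF E] by blast
    then show ?thesis using True submod_0[OF st_submod[OF fg_frac_submod]] star_fI by blast
  next
    case False
    have "gen R {x} \<subseteq> E" using gen_subset_ideal[OF E(1)] x by auto
    moreover have fg: "fg_frac R (gen R {x})" using fg_single False by blast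
    moreover have "x \<in> st (gen R {x})"
      using st_ext[OF fg_frac_submod[OF fg]] gen_base[of x "{x}" R] subring_1[OF sr] by auto
    ultimately show ?thesis using star_fI[of "gen R {x}" E x] by blast
  qed
qed

lemma star_f_closure_quasi:
  assumes E: "is_ideal R E" "E \<noteq> {0}" and ne: "star_f R st E \<noteq> st R"
  defines "J \<equiv> star_f R st E \<inter> R"
  shows "quasi_ideal R (star_f R st) J" "J \<noteq> R" "E \<subseteq> J"
proof -
  show EJ: "E \<subseteq> J" unfolding J_def using ideal_sub_star_f[OF E] ideal_sub[OF E(1)] by auto
  show "J \<noteq> R"
  proof
    assume "J = R"
    then have "1 \<in> star_f R st E" unfolding J_def using subring_1[OF sr] by auto
    then obtain G where G: "fg_frac R G" "G \<subseteq> E" "1 \<in> st G" by (auto elim: star_fE)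
    have "st R \<subseteq> st G" using one_st fg_frac_submod G by blast
    also have "\<dots> \<subseteq> star_f R st E" using G star_fI by blast
    finally show False using star_f_le[OF ideal_sub[OF E(1)]] ne by blast
  qed
  have idJ: "is_ideal R J" unfolding is_ideal_def
  proof (intro conjI ballI)
    show "J \<subseteq> R" "0 \<in> J" using EJ ideal_0[OF E(1)] unfolding J_def by auto
  next
    fix x y assume "x \<in> J" "y \<in> J"
    then obtain G where G: "fg_frac R G" "G \<subseteq> E" "{x,y} \<subseteq> st G"
      using finite_in_star_f[OF E, of "{x,y}"] unfolding J_def by auto
    have "x + y \<in> st G" using G submod_add[OF st_submod[OF fg_frac_submod[OF G(1)]]] by auto
    then show "x + y \<in> J" using star_fI[OF G(1,2)] \<open>x \<in> J\<close> \<open>y \<in> J\<close> sr unfolding J_def subring_of_def by auto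
  next
    fix r x assume "r \<in> R" "x \<in> J"
    then obtain G where G: "fg_frac R G" "G \<subseteq> E" "{x} \<subseteq> st G"
      using finite_in_star_f[OF E, of "{x}"] unfolding J_def by auto
    have "r * x \<in> st G" using G submod_mult[OF st_submod[OF fg_frac_submod[OF G(1)]] \<open>r \<in> R\<close>] by auto
    then show "r * x \<in> J" using star_fI[OF G(1,2)] \<open>r \<in> R\<close> \<open>x \<in> J\<close> sr unfolding J_def subring_of_def by auto
  qed
  have J0: "J \<noteq> {0}" using EJ E(2) ideal_0[OF E(1)] by auto
  have "star_f R st J \<inter> R \<subseteq> J"
  proof
    fix x assume "x \<in> star_f R st J \<inter> R"
    then obtain F where F: "fg_frac R F" "F \<subseteq> J" "x \<in> st F" "x \<in> R" by (auto elim: star_fE)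
    obtain S0 where S0: "finite S0" "F = gen R S0" using F(1) unfolding fg_frac_def by auto
    have "S0 \<subseteq> F" using S0 gen_base subring_1[OF sr] by blast
    then have "S0 \<subseteq> star_f R st E" using F(2) unfolding J_def by auto
    then obtain G where G: "fg_frac R G" "G \<subseteq> E" "S0 \<subseteq> st G"
      using finite_in_star_f[OF E S0(1)] by auto
    have sG: "submod R (st G)" using st_submod fg_frac_submod G(1) by blast
    have "F \<subseteq> st G" unfolding S0(2) using sG G(3) unfolding submod_def
      by (intro gen_least) auto
    then have "st F \<subseteq> st (st G)" using st_mono fg_frac_submod F(1) sG by blast
    then have "x \<in> st G" using F(3) st_idem fg_frac_submod G(1) by blast
    then show "x \<in> J" using star_fI[OF G(1,2)] F(4) unfolding J_def by auto
  qed
  moreover have "J \<subseteq> star_f R st J \<inter> R" using ideal_sub_star_f[OF idJ J0] ideal_sub[OF idJ] by auto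
  ultimately show "quasi_ideal R (star_f R st) J" unfolding quasi_ideal_def using idJ J0 by auto
qed

lemma submod_scale: "submod R E \<Longrightarrow> a \<noteq> 0 \<Longrightarrow> submod R ((\<lambda>e. a * e) ` E)"
proof -
  assume E: "submod R E" and a: "a \<noteq> 0"
  have 1: "0 \<in> (\<lambda>e. a * e) ` E" using submod_0[OF E] by (auto intro!: image_eqI[of 0 _ 0])
  obtain y where y: "y \<in> E" "y \<noteq> 0" using E unfolding submod_def by auto
  have 2: "(\<lambda>e. a * e) ` E \<noteq> {0}" using y a by (auto dest!: equalityD1)
  have 3: "\<forall>x\<in>(\<lambda>e. a * e) ` E. \<forall>y\<in>(\<lambda>e. a * e) ` E. x + y \<in> (\<lambda>e. a * e) ` E"
  proof (intro ballI)
    fix x y assume "x \<in> (\<lambda>e. a * e) ` E" "y \<in> (\<lambda>e. a * e) ` E"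
    then obtain u v where "u \<in> E" "v \<in> E" "x = a * u" "y = a * v" by auto
    then have "u + v \<in> E" "x + y = a * (u + v)" using submod_add[OF E] by (auto simp: distrib_left)
    then show "x + y \<in> (\<lambda>e. a * e) ` E" by blast
  qed
  have 4: "\<forall>r\<in>R. \<forall>x\<in>(\<lambda>e. a * e) ` E. r * x \<in> (\<lambda>e. a * e) ` E"
  proof (intro ballI)
    fix r x assume "r \<in> R" "x \<in> (\<lambda>e. a * e) ` E"
    then obtain u where "u \<in> E" "x = a * u" by auto
    then show "r * x \<in> (\<lambda>e. a * e) ` E" using submod_mult[OF E \<open>r \<in> R\<close>]
      by (auto simp: mult.left_commute)
  qed
  show ?thesis unfolding submod_def using 1 2 3 4 by blast
qed

lemma QMax_prime:
  assumes P: "P \<in> QMax R (star_f R st)" and ab: "a \<in> R" "b \<in> R" "a * b \<in> P" and na: "a \<notin> P"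
  shows "b \<in> P"
proof -
  have qP: "quasi_ideal R (star_f R st) P" "P \<noteq> R"
   and maxP: "\<And>J. quasi_ideal R (star_f R st) J \<Longrightarrow> J \<noteq> R \<Longrightarrow> P \<subseteq> J \<Longrightarrow> J = P"
    using P unfolding QMax_def by auto
  have idP: "is_ideal R P" and P0: "P \<noteq> {0}" and Pq: "star_f R st P \<inter> R = P" using qP unfolding quasi_ideal_def by auto
  have a0: "a \<noteq> 0" using na ideal_0[OF idP] by auto
  define C where "C = {x \<in> R. x * a \<in> P}"
  have PC: "P \<subseteq> C" unfolding C_def using ideal_sub[OF idP] ideal_mult2[OF idP ab(1)] by auto
  have idC: "is_ideal R C" unfolding is_ideal_def C_def
    using ideal_0[OF idP] ideal_add[OF idP] ideal_mult[OF idP] sr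
    by (auto simp: distrib_right mult.assoc subring_of_def)
  have CR: "C \<noteq> R"
  proof
    assume "C = R"
    then have "1 \<in> C" using subring_1[OF sr] by simp
    then show False using na unfolding C_def by simp
  qed
  have C0: "C \<noteq> {0}"
  proof
    assume "C = {0}"
    then have "P \<subseteq> {0}" using PC by simp
    then show False using P0 ideal_0[OF idP] by blast
  qed
  have "star_f R st C \<inter> R \<subseteq> C"
  proof
    fix x assume "x \<in> star_f R st C \<inter> R"
    then obtain F where F: "fg_frac R F" "F \<subseteq> C" "x \<in> st F" "x \<in> R" by (auto elim: star_fE)
    obtain S0 where S0: "finite S0" "F = gen R S0" using F(1) unfolding fg_frac_def by auto
    define F' where "F' = gen R ((\<lambda>e. a * e) ` S0)"
    have aF: "(\<lambda>e. a * e) ` F \<subseteq> F'"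
    proof
      fix y assume "y \<in> (\<lambda>e. a * e) ` F"
      then obtain z where z: "z \<in> F" "y = a * z" by auto
      obtain T c where T: "finite T" "T \<subseteq> S0" "\<forall>s\<in>T. c s \<in> R" "z = (\<Sum>s\<in>T. c s * s)"
        using z(1) S0(2) by (auto elim: genE)
      have "y = (\<Sum>s\<in>T. c s * (a * s))" using z T by (simp add: sum_distrib_left algebra_simps)
      also have "\<dots> \<in> F'" unfolding F'_def using T
        by (intro gen_sum[OF subring_0[OF sr] subring_add[OF sr]]) auto
      finally show "y \<in> F'" .
    qed
    have S0C: "S0 \<subseteq> C" using F(2) S0 gen_base subring_1[OF sr] by blast
    have F'P: "F' \<subseteq> P" unfolding F'_def using S0C unfolding C_def
      by (intro gen_subset_ideal[OF idP]) (auto simp: mult.commute)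
    have smF: "submod R F" using fg_frac_submod F(1) by blast
    obtain y where y: "y \<in> F" "y \<noteq> 0" using smF unfolding submod_def by auto
    have fgF': "fg_frac R F'" unfolding fg_frac_def F'_def using S0(1) aF y a0 F'_def by auto
    have "a * x \<in> (\<lambda>e. a * e) ` st F" using F(3) by auto
    also have "\<dots> = st ((\<lambda>e. a * e) ` F)" using st_scale[OF smF a0] by simp
    also have "\<dots> \<subseteq> st F'" using st_mono[OF submod_scale[OF smF a0] fg_frac_submod[OF fgF'] aF] .
    finally have "a * x \<in> star_f R st P" using star_fI[OF fgF' F'P] by auto
    then have "a * x \<in> P" using Pq subring_mult[OF sr ab(1) F(4)] by auto
    then show "x \<in> C" unfolding C_def using F(4) by (simp add: mult.commute)
  qed
  moreover have "C \<subseteq> star_f R st C \<inter> R" using ideal_sub_star_f[OF idC C0] ideal_sub[OF idC] by auto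
  ultimately have "quasi_ideal R (star_f R st) C" unfolding quasi_ideal_def using idC C0 by auto
  then have "C = P" using maxP CR PC by blast
  moreover have "b \<in> C" unfolding C_def using ab by (simp add: mult.commute)
  ultimately show ?thesis by simp
qed

lemma QMax_exists:
  assumes J: "quasi_ideal R (star_f R st) J" "J \<noteq> R"
  shows "\<exists>P \<in> QMax R (star_f R st). J \<subseteq> P"
proof -
  define A where "A = {I. quasi_ideal R (star_f R st) I \<and> I \<noteq> R \<and> J \<subseteq> I}"
  have "A \<noteq> {}" using J unfolding A_def by auto
  have "\<exists>M\<in>A. \<forall>X\<in>A. M \<subseteq> X \<longrightarrow> X = M"
  proof (rule subset_Zorn_nonempty[OF \<open>A \<noteq> {}\<close>])
    fix \<C> assume C: "\<C> \<noteq> {}" "subset.chain A \<C>"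
    have CA: "\<C> \<subseteq> A" using C(2) unfolding subset.chain_def by auto
    have comp: "\<And>X Y. X \<in> \<C> \<Longrightarrow> Y \<in> \<C> \<Longrightarrow> X \<subseteq> Y \<or> Y \<subseteq> X"
      using C(2) unfolding subset.chain_def by auto
    have mem: "\<And>X. X \<in> \<C> \<Longrightarrow> quasi_ideal R (star_f R st) X \<and> X \<noteq> R \<and> J \<subseteq> X"
      using CA unfolding A_def by auto
    have idX: "\<And>X. X \<in> \<C> \<Longrightarrow> is_ideal R X" using mem unfolding quasi_ideal_def by auto
    obtain X0 where X0: "X0 \<in> \<C>" using C(1) by auto
    have JU: "J \<subseteq> \<Union>\<C>" using mem X0 by blast
    have idU: "is_ideal R (\<Union>\<C>)" unfolding is_ideal_def
    proof (intro conjI ballI)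
      show "\<Union>\<C> \<subseteq> R" using idX ideal_sub by blast
      show "0 \<in> \<Union>\<C>" using idX[OF X0] ideal_0 X0 by blast
    next
      fix x y assume "x \<in> \<Union>\<C>" "y \<in> \<Union>\<C>"
      then obtain X Y where "X \<in> \<C>" "Y \<in> \<C>" "x \<in> X" "y \<in> Y" by auto
      then show "x + y \<in> \<Union>\<C>" using comp[of X Y] idX ideal_add by blast
    next
      fix r x assume "r \<in> R" "x \<in> \<Union>\<C>"
      then show "r * x \<in> \<Union>\<C>" using idX ideal_mult by blast
    qed
    have J0: "J \<noteq> {0}" "0 \<in> J" using J(1) ideal_0 unfolding quasi_ideal_def by auto
    have U0: "\<Union>\<C> \<noteq> {0}"
    proof
      assume "\<Union>\<C> = {0}"
      then have "J \<subseteq> {0}" using JU by simp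
      then show False using J0 by blast
    qed
    have "star_f R st (\<Union>\<C>) \<inter> R \<subseteq> \<Union>\<C>"
    proof
      fix x assume "x \<in> star_f R st (\<Union>\<C>) \<inter> R"
      then obtain F where F: "fg_frac R F" "F \<subseteq> \<Union>\<C>" "x \<in> st F" "x \<in> R" by (auto elim: star_fE)
      obtain S0 where S0: "finite S0" "F = gen R S0" using F(1) unfolding fg_frac_def by auto
      have "S0 \<subseteq> \<Union>\<C>" using F(2) S0 gen_base subring_1[OF sr] by blast
      then obtain X where X: "X \<in> \<C>" "S0 \<subseteq> X" using finite_subset_Union_chain[OF S0(1) _ C(1,2)] by blast
      have "F \<subseteq> X" unfolding S0(2) using gen_subset_ideal[OF idX[OF X(1)] X(2)] .
      then have "x \<in> star_f R st X \<inter> R" using star_fI[OF F(1)] F by auto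
      then show "x \<in> \<Union>\<C>" using mem[OF X(1)] X(1) unfolding quasi_ideal_def by auto
    qed
    moreover have "\<Union>\<C> \<subseteq> star_f R st (\<Union>\<C>) \<inter> R" using ideal_sub_star_f[OF idU U0] ideal_sub[OF idU] by auto
    moreover have "\<Union>\<C> \<noteq> R"
    proof
      assume "\<Union>\<C> = R"
      then obtain X where "X \<in> \<C>" "1 \<in> X" using subring_1[OF sr] by auto
      then show False using mem ideal_one idX by blast
    qed
    ultimately show "\<Union>\<C> \<in> A" unfolding A_def quasi_ideal_def using idU U0 JU by auto
  qed
  then obtain M where M: "M \<in> A" "\<forall>X\<in>A. M \<subseteq> X \<longrightarrow> X = M" by blast
  have "M \<in> QMax R (star_f R st)" unfolding QMax_def
    using M unfolding A_def by auto
  then show ?thesis using M unfolding A_def by auto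
qed

end

lemma polys_overI: "(\<And>i. coeff p i \<in> A) \<Longrightarrow> p \<in> polys_over A"
  unfolding polys_over_def by auto
lemma polys_overD: "p \<in> polys_over A \<Longrightarrow> coeff p i \<in> A"
  unfolding polys_over_def by auto

lemma polys_over_0: "0 \<in> A \<Longrightarrow> 0 \<in> polys_over A"
  by (rule polys_overI) simp
lemma polys_over_const: "0 \<in> A \<Longrightarrow> ([:d:] \<in> polys_over A) = (d \<in> A)"
  unfolding polys_over_def by (auto simp: coeff_pCons split: nat.splits)
lemma polys_over_1: "0 \<in> A \<Longrightarrow> 1 \<in> A \<Longrightarrow> 1 \<in> polys_over A"
  using polys_over_const[of A 1] by (simp add: one_pCons)
lemma polys_over_mono: "A \<subseteq> B \<Longrightarrow> polys_over A \<subseteq> polys_over B"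
  unfolding polys_over_def by auto

lemma polys_over_add: "(\<forall>x\<in>A. \<forall>y\<in>A. x + y \<in> A) \<Longrightarrow> p \<in> polys_over A \<Longrightarrow> q \<in> polys_over A \<Longrightarrow> p + q \<in> polys_over A"
  unfolding polys_over_def by auto

lemma polys_over_sr_add: "subring_of R \<Longrightarrow> p \<in> polys_over R \<Longrightarrow> q \<in> polys_over R \<Longrightarrow> p + q \<in> polys_over R"
  using polys_over_add subring_add by blast
lemma polys_over_sr_uminus: "subring_of R \<Longrightarrow> p \<in> polys_over R \<Longrightarrow> - p \<in> polys_over R"
  unfolding polys_over_def using subring_uminus by auto
lemma polys_over_sr_mult: "subring_of R \<Longrightarrow> p \<in> polys_over R \<Longrightarrow> q \<in> polys_over R \<Longrightarrow> p * q \<in> polys_over R"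
  by (rule polys_overI, unfold coeff_mult)
     (auto intro!: sum_closed subring_0 subring_add subring_mult dest: polys_overD)
lemma polys_over_sr_diff: "subring_of R \<Longrightarrow> p \<in> polys_over R \<Longrightarrow> q \<in> polys_over R \<Longrightarrow> p - q \<in> polys_over R"
  using polys_over_sr_add polys_over_sr_uminus by (metis diff_conv_add_uminus)
lemma polys_over_ideal_mult: "is_ideal R I \<Longrightarrow> p \<in> polys_over R \<Longrightarrow> q \<in> polys_over I \<Longrightarrow> p * q \<in> polys_over I"
  by (rule polys_overI, unfold coeff_mult)
     (auto intro!: ideal_sum ideal_mult dest: polys_overD)
lemma polys_over_ideal_add: "is_ideal R I \<Longrightarrow> p \<in> polys_over I \<Longrightarrow> q \<in> polys_over I \<Longrightarrow> p + q \<in> polys_over I"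
  unfolding polys_over_def by (auto intro!: ideal_add)
lemma polys_over_smult: "subring_of R \<Longrightarrow> d \<in> R \<Longrightarrow> p \<in> polys_over R \<Longrightarrow> smult d p \<in> polys_over R"
  unfolding polys_over_def by (auto intro!: subring_mult)
lemma polys_over_monom: "0 \<in> A \<Longrightarrow> c \<in> A \<Longrightarrow> monom c n \<in> polys_over A"
  unfolding polys_over_def by (auto simp: coeff_monom)

lemma Spec_ideal: "Q \<in> Spec R \<Longrightarrow> is_ideal R Q"
  unfolding Spec_def by auto
lemma Spec_prime: "Q \<in> Spec R \<Longrightarrow> a \<in> R \<Longrightarrow> b \<in> R \<Longrightarrow> a * b \<in> Q \<Longrightarrow> a \<in> Q \<or> b \<in> Q"
  unfolding Spec_def by auto
lemma Spec_ne: "Q \<in> Spec R \<Longrightarrow> Q \<noteq> R"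
  unfolding Spec_def by auto

lemma poly_prime:
  assumes sr: "subring_of R" and Q: "Q \<in> Spec R" and p: "p \<in> polys_over R" and q: "q \<in> polys_over R"
    and pq: "p * q \<in> polys_over Q"
  shows "p \<in> polys_over Q \<or> q \<in> polys_over Q"
proof (rule ccontr)
  assume "\<not> ?thesis"
  then obtain i0 j0 where "coeff p i0 \<notin> Q" "coeff q j0 \<notin> Q" unfolding polys_over_def by auto
  define i where "i = (LEAST i. coeff p i \<notin> Q)"
  define j where "j = (LEAST j. coeff q j \<notin> Q)"
  have pi: "coeff p i \<notin> Q" and pk: "\<And>k. k < i \<Longrightarrow> coeff p k \<in> Q"
    unfolding i_def using \<open>coeff p i0 \<notin> Q\<close> by (metis LeastI, metis not_less_Least)
  have qj: "coeff q j \<notin> Q" and qk: "\<And>k. k < j \<Longrightarrow> coeff q k \<in> Q"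
    unfolding j_def using \<open>coeff q j0 \<notin> Q\<close> by (metis LeastI, metis not_less_Least)
  have idQ: "is_ideal R Q" using Spec_ideal[OF Q] .
  let ?t = "\<lambda>k. coeff p k * coeff q (i + j - k)"
  have split: "coeff (p * q) (i + j) = ?t i + (\<Sum>k\<in>{..i+j} - {i}. ?t k)"
    unfolding coeff_mult by (subst sum.remove[of _ i]) auto
  have rest: "(\<Sum>k\<in>{..i+j} - {i}. ?t k) \<in> Q"
  proof (rule ideal_sum[OF idQ], rule ballI)
    fix k assume k: "k \<in> {..i+j} - {i}"
    show "?t k \<in> Q"
    proof (cases "k < i")
      case True
      then show ?thesis using ideal_mult2[OF idQ polys_overD[OF q] pk] by blast
    next
      case False
      then have "i + j - k < j" using k by auto
      then show ?thesis using ideal_mult[OF idQ polys_overD[OF p] qk] by blast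
    qed
  qed
  have "?t i = coeff (p * q) (i + j) - (\<Sum>k\<in>{..i+j} - {i}. ?t k)" using split by simp
  also have "\<dots> \<in> Q" using ideal_diff[OF sr idQ polys_overD[OF pq] rest] .
  finally have "coeff p i * coeff q j \<in> Q" by simp
  then show False using Spec_prime[OF Q polys_overD[OF p] polys_overD[OF q]] pi qj by blast
qed


context ssr
begin

lemma emb_D1[simp]: "emb p \<in> D1 R \<longleftrightarrow> p \<in> polys_over R"
  unfolding D1_def by (auto)
lemma D1E: "x \<in> D1 R \<Longrightarrow> (\<And>p. p \<in> polys_over R \<Longrightarrow> x = emb p \<Longrightarrow> thesis) \<Longrightarrow> thesis"
  unfolding D1_def by auto
lemma emb_extX[simp]: "emb p \<in> extX P \<longleftrightarrow> p \<in> polys_over P"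
  unfolding extX_def by auto
lemma extXE: "x \<in> extX P \<Longrightarrow> (\<And>p. p \<in> polys_over P \<Longrightarrow> x = emb p \<Longrightarrow> thesis) \<Longrightarrow> thesis"
  unfolding extX_def by auto

lemma sr1: "subring_of (D1 R)"
  unfolding subring_of_def
proof (intro conjI ballI)
  show "0 \<in> D1 R" using emb_D1[of 0] polys_over_0[OF subring_0[OF sr]] by simp
  show "1 \<in> D1 R" using emb_D1[of 1] polys_over_1[OF subring_0[OF sr] subring_1[OF sr]] by simp
next
  fix x y assume "x \<in> D1 R" "y \<in> D1 R"
  then obtain p q where pq: "p \<in> polys_over R" "q \<in> polys_over R" "x = emb p" "y = emb q"
    by (auto elim!: D1E)
  show "x + y \<in> D1 R" using pq polys_over_sr_add[OF sr] by (simp add: emb_add[symmetric])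
  show "x * y \<in> D1 R" using pq polys_over_sr_mult[OF sr] by (simp add: emb_mult[symmetric])
  show "- x \<in> D1 R" using pq polys_over_sr_uminus[OF sr] by (simp add: emb_uminus[symmetric])
qed

lemma embK_D1: "d \<in> R \<Longrightarrow> embK d \<in> D1 R"
  unfolding embK_def using polys_over_const[OF subring_0[OF sr]] by simp
lemma embK_mult: "embK (a * b) = embK a * embK b"
  unfolding embK_def by (simp add: emb_mult[symmetric])
lemma embK_add: "embK (a + b) = embK a + embK b"
  unfolding embK_def by (simp add: emb_add[symmetric])
lemma embK_0[simp]: "embK 0 = 0" unfolding embK_def by simp
lemma embK_1[simp]: "embK 1 = 1" unfolding embK_def by (simp add: one_pCons[symmetric])
lemma embK_eq_0[simp]: "embK d = 0 \<longleftrightarrow> d = 0" unfolding embK_def by simp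

lemma extX_ideal: "is_ideal R P \<Longrightarrow> is_ideal (D1 R) (extX P)"
  unfolding is_ideal_def[of "D1 R"]
proof (intro conjI ballI)
  assume P: "is_ideal R P"
  show "extX P \<subseteq> D1 R" using polys_over_mono[OF ideal_sub[OF P]] by (auto elim!: extXE)
  show "0 \<in> extX P" using emb_extX[of 0 P] polys_over_0[OF ideal_0[OF P]] by simp
  fix x y assume "x \<in> extX P" "y \<in> extX P"
  then obtain p q where pq: "p \<in> polys_over P" "q \<in> polys_over P" "x = emb p" "y = emb q"
    by (auto elim!: extXE)
  show "x + y \<in> extX P" using pq polys_over_ideal_add[OF P] by (simp add: emb_add[symmetric])
next
  fix r x assume P: "is_ideal R P" and "r \<in> D1 R" "x \<in> extX P"
  then obtain p q where pq: "p \<in> polys_over R" "q \<in> polys_over P" "r = emb p" "x = emb q"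
    by (auto elim!: extXE D1E)
  show "r * x \<in> extX P" using pq polys_over_ideal_mult[OF P] by (simp add: emb_mult[symmetric])
qed

lemma extX_Spec: "P \<in> Spec R \<Longrightarrow> extX P \<in> Spec (D1 R)"
proof -
  assume P: "P \<in> Spec R"
  have idP: "is_ideal R P" using Spec_ideal[OF P] .
  have "1 \<notin> P" using ideal_one[OF idP] Spec_ne[OF P] by blast
  then have ne: "extX P \<noteq> D1 R"
    using sr1 subring_1 emb_extX[of 1 P] emb_1 polys_over_const[OF ideal_0[OF idP], of 1]
    by (metis one_pCons)
  have pr: "\<forall>a\<in>D1 R. \<forall>b\<in>D1 R. a * b \<in> extX P \<longrightarrow> a \<in> extX P \<or> b \<in> extX P"
  proof (intro ballI impI)
    fix a b assume "a \<in> D1 R" "b \<in> D1 R" "a * b \<in> extX P"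
    then obtain p q where pq: "p \<in> polys_over R" "q \<in> polys_over R" "a = emb p" "b = emb q"
      by (auto elim!: D1E)
    then have "p * q \<in> polys_over P" using \<open>a * b \<in> extX P\<close> by (simp add: emb_mult[symmetric])
    then show "a \<in> extX P \<or> b \<in> extX P" using poly_prime[OF sr P pq(1,2)] pq by simp
  qed
  show ?thesis unfolding Spec_def using extX_ideal[OF idP] ne pr by blast
qed

lemma contr_extX: "P \<subseteq> R \<Longrightarrow> 0 \<in> P \<Longrightarrow> contr R (extX P) = P"
  unfolding contr_def embK_def using polys_over_const[of P] by auto

lemma contr_ideal: "is_ideal (D1 R) Q \<Longrightarrow> is_ideal R (contr R Q)"
  unfolding is_ideal_def contr_def
  using embK_D1 sr by (auto simp: embK_mult embK_add subring_of_def)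

lemma zero_Spec: "{0} \<in> Spec (D1 R)"
proof -
  have "is_ideal (D1 R) {0}" unfolding is_ideal_def using subring_0[OF sr1] by auto
  moreover have "{0} \<noteq> D1 R" using subring_1[OF sr1] by (metis one_neq_zero singletonD)
  ultimately show ?thesis unfolding Spec_def by auto
qed

lemma zero_Delta: "{0} \<in> Delta1 R st"
proof -
  have "contr R {0} = {0}" unfolding contr_def using subring_0[OF sr] by auto
  then show ?thesis unfolding Delta1_def using zero_Spec by auto
qed

lemma Delta_Spec: "Q \<in> Delta1 R st \<Longrightarrow> Q \<in> Spec (D1 R)"
  unfolding Delta1_def by auto

lemma QMax_Spec: "P \<in> QMax R (star_f R st) \<Longrightarrow> P \<in> Spec R"
proof -
  assume P: "P \<in> QMax R (star_f R st)"
  then have "is_ideal R P" "P \<noteq> R" unfolding QMax_def quasi_ideal_def by auto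
  then show ?thesis unfolding Spec_def using QMax_prime[OF P] by blast
qed

lemma QMax_star_f_ne: "P \<in> QMax R (star_f R st) \<Longrightarrow> star_f R st P \<subset> st R"
proof -
  assume P: "P \<in> QMax R (star_f R st)"
  then have idP: "is_ideal R P" and "P \<noteq> R" and q: "star_f R st P \<inter> R = P"
    unfolding QMax_def quasi_ideal_def by auto
  have "1 \<notin> P" using ideal_one[OF idP] \<open>P \<noteq> R\<close> by blast
  then have "1 \<notin> star_f R st P" using q subring_1[OF sr] by blast
  moreover have "1 \<in> st R" using st_ext[OF R_submod] subring_1[OF sr] by blast
  ultimately show ?thesis using star_f_le[OF ideal_sub[OF idP]] by blast
qed

lemma QMax_Delta: "P \<in> QMax R (star_f R st) \<Longrightarrow> extX P \<in> Delta1 R st"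
proof -
  assume P: "P \<in> QMax R (star_f R st)"
  have idP: "is_ideal R P" using P unfolding QMax_def quasi_ideal_def by auto
  have c: "contr R (extX P) = P" using contr_extX[OF ideal_sub[OF idP] ideal_0[OF idP]] .
  show ?thesis unfolding Delta1_def using extX_Spec[OF QMax_Spec[OF P]] c QMax_star_f_ne[OF P] by auto
qed

lemma Delta_one: "Q \<in> Delta1 R st \<Longrightarrow> 1 \<notin> Q"
  using Delta_Spec Spec_ne Spec_ideal ideal_one by blast

lemma S1_sub: "S1 R st \<subseteq> polys_over (D1 R)"
  unfolding S1_def by auto
lemma S1_notin: "s \<in> S1 R st \<Longrightarrow> Q \<in> Delta1 R st \<Longrightarrow> s \<notin> polys_over Q"
  unfolding S1_def by auto
lemma S1I: "s \<in> polys_over (D1 R) \<Longrightarrow> (\<And>Q. Q \<in> Delta1 R st \<Longrightarrow> s \<notin> polys_over Q) \<Longrightarrow> s \<in> S1 R st"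
  unfolding S1_def by auto

lemma S1_nz: "s \<in> S1 R st \<Longrightarrow> s \<noteq> 0"
  using S1_notin[OF _ zero_Delta] polys_over_0[of "{0}"] by auto

lemma S1_one: "1 \<in> S1 R st"
proof (rule S1I)
  show "1 \<in> polys_over (D1 R)" using polys_over_1 subring_0[OF sr1] subring_1[OF sr1] by blast
  fix Q assume "Q \<in> Delta1 R st"
  then have "1 \<notin> Q" "0 \<in> Q" using Delta_one Delta_Spec Spec_ideal ideal_0 by blast+
  then show "1 \<notin> polys_over Q" using polys_over_const[of Q 1] by (simp add: one_pCons)
qed

lemma S1_mult: "s \<in> S1 R st \<Longrightarrow> t \<in> S1 R st \<Longrightarrow> s * t \<in> S1 R st"
proof (rule S1I)
  assume s: "s \<in> S1 R st" and t: "t \<in> S1 R st"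
  show "s * t \<in> polys_over (D1 R)" using polys_over_sr_mult[OF sr1] S1_sub s t by blast
  fix Q assume Q: "Q \<in> Delta1 R st"
  show "s * t \<notin> polys_over Q"
    using poly_prime[OF sr1 Delta_Spec[OF Q]] S1_sub s t S1_notin[OF _ Q] by blast
qed

lemma S1_prod: "finite T \<Longrightarrow> (\<forall>t\<in>T. f t \<in> S1 R st) \<Longrightarrow> prod f T \<in> S1 R st"
  by (induction T rule: finite_induct) (auto intro: S1_one S1_mult)

lemma D1Y_locE: "x \<in> D1Y_loc R st \<Longrightarrow> (\<And>f s. f \<in> polys_over (D1 R) \<Longrightarrow> s \<in> S1 R st \<Longrightarrow> x = emb f / emb s \<Longrightarrow> thesis) \<Longrightarrow> thesis"
  unfolding D1Y_loc_def by blast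
lemma D1Y_locI: "f \<in> polys_over (D1 R) \<Longrightarrow> s \<in> S1 R st \<Longrightarrow> emb f / emb s \<in> D1Y_loc R st"
  unfolding D1Y_loc_def by blast

lemma D1Y_loc_0: "0 \<in> D1Y_loc R st"
  using D1Y_locI[OF polys_over_0[OF subring_0[OF sr1]] S1_one] by simp
lemma D1Y_loc_1: "1 \<in> D1Y_loc R st"
  using D1Y_locI[OF polys_over_1[OF subring_0[OF sr1] subring_1[OF sr1]] S1_one] by simp
lemma D1Y_loc_add: "\<forall>x\<in>D1Y_loc R st. \<forall>y\<in>D1Y_loc R st. x + y \<in> D1Y_loc R st"
proof (intro ballI)
  fix x y assume "x \<in> D1Y_loc R st" "y \<in> D1Y_loc R st"
  then obtain f s g t where fs: "f \<in> polys_over (D1 R)" "s \<in> S1 R st" "x = emb f / emb s"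
    and gt: "g \<in> polys_over (D1 R)" "t \<in> S1 R st" "y = emb g / emb t"
    by (auto elim!: D1Y_locE)
  have nz: "emb s \<noteq> 0" "emb t \<noteq> 0" using S1_nz fs gt by auto
  have "x + y = emb (f * t + g * s) / emb (s * t)"
    using nz fs gt by (simp add: emb_add emb_mult field_simps)
  moreover have "f * t + g * s \<in> polys_over (D1 R)"
    using fs gt S1_sub polys_over_sr_mult[OF sr1] polys_over_sr_add[OF sr1] by blast
  ultimately show "x + y \<in> D1Y_loc R st" using D1Y_locI S1_mult fs gt by auto
qed

end

lemma prod_not_Q:
  assumes sr: "subring_of R" and Q: "Q \<in> Spec R"
  shows "finite T \<Longrightarrow> (\<forall>t\<in>T. s t \<in> polys_over R \<and> s t \<notin> polys_over Q) \<Longrightarrow>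
     prod s T \<in> polys_over R \<and> prod s T \<notin> polys_over Q"
proof (induction T rule: finite_induct)
  case empty
  have "1 \<notin> Q" using Spec_ne[OF Q] ideal_one[OF Spec_ideal[OF Q]] by blast
  then show ?case using polys_over_1[OF subring_0[OF sr] subring_1[OF sr]]
      polys_over_const[OF ideal_0[OF Spec_ideal[OF Q]], of 1] by (simp add: one_pCons)
next
  case (insert t T)
  then show ?case using poly_prime[OF sr Q] polys_over_sr_mult[OF sr] by auto
qed

lemma clear_denoms:
  fixes R :: "'f::field set"
  assumes sr: "subring_of R" and Q: "Q \<in> Spec R" and T: "finite T"
    and H: "\<forall>t\<in>T. s t \<in> polys_over R \<and> s t \<notin> polys_over Q \<and> f t \<in> polys_over R \<and> e t \<in> Q
              \<and> c t * emb (s t) = emb (f t)"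
    and eq: "emb [:a:] = (\<Sum>t\<in>T. c t * emb [:e t:])" and a: "a \<in> R"
  shows "a \<in> Q"
proof -
  define \<sigma> where "\<sigma> = prod s T"
  have \<sigma>: "\<sigma> \<in> polys_over R" "\<sigma> \<notin> polys_over Q" using prod_not_Q[OF sr Q T] H unfolding \<sigma>_def by auto
  have idQ: "is_ideal R Q" using Spec_ideal[OF Q] .
  have "emb (\<sigma> * [:a:]) = (\<Sum>t\<in>T. c t * emb \<sigma> * emb [:e t:])"
    unfolding emb_mult eq by (simp add: sum_distrib_left algebra_simps)
  also have "\<dots> = (\<Sum>t\<in>T. emb (f t * prod s (T - {t}) * [:e t:]))"
  proof (rule sum.cong[OF refl])
    fix t assume t: "t \<in> T"
    have "\<sigma> = s t * prod s (T - {t})" unfolding \<sigma>_def using prod.remove[OF T t] .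
    then have "c t * emb \<sigma> = c t * emb (s t) * emb (prod s (T - {t}))" by (simp add: emb_mult)
    also have "\<dots> = emb (f t * prod s (T - {t}))" using H t by (simp add: emb_mult)
    finally have ct: "c t * emb \<sigma> = emb (f t * prod s (T - {t}))" .
    show "c t * emb \<sigma> * emb [:e t:] = emb (f t * prod s (T - {t}) * [:e t:])"
      by (simp only: ct emb_mult)
  qed
  also have "\<dots> = emb (\<Sum>t\<in>T. f t * prod s (T - {t}) * [:e t:])" by (simp add: emb_sum)
  finally have eq2: "\<sigma> * [:a:] = (\<Sum>t\<in>T. f t * prod s (T - {t}) * [:e t:])" by simp
  have "(\<Sum>t\<in>T. f t * prod s (T - {t}) * [:e t:]) \<in> polys_over Q"
  proof (rule sum_closed)
    show "0 \<in> polys_over Q" using polys_over_0[OF ideal_0[OF idQ]] .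
    show "\<forall>x\<in>polys_over Q. \<forall>y\<in>polys_over Q. x + y \<in> polys_over Q" using polys_over_ideal_add[OF idQ] by blast
    show "\<forall>t\<in>T. f t * prod s (T - {t}) * [:e t:] \<in> polys_over Q"
    proof
      fix t assume t: "t \<in> T"
      have "prod s (T - {t}) \<in> polys_over R" using prod_not_Q[OF sr Q, of "T - {t}" s] T H by auto
      then have "f t * prod s (T - {t}) \<in> polys_over R" using polys_over_sr_mult[OF sr] H t by blast
      moreover have "[:e t:] \<in> polys_over Q" using polys_over_const[OF ideal_0[OF idQ]] H t by blast
      ultimately show "f t * prod s (T - {t}) * [:e t:] \<in> polys_over Q" by (rule polys_over_ideal_mult[OF idQ])
    qed
  qed
  then have "\<sigma> * [:a:] \<in> polys_over Q" using eq2 by simp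
  moreover obtain i where i: "coeff \<sigma> i \<notin> Q" using \<sigma>(2) unfolding polys_over_def by auto
  ultimately have "coeff \<sigma> i * a \<in> Q" using polys_overD[of "\<sigma> * [:a:]" Q i] by (simp add: mult.commute)
  then show ?thesis using Spec_prime[OF Q polys_overD[OF \<sigma>(1)] a] i by blast
qed

context ssr begin

lemma bsI: "emb [:x:] \<in> gen (D1Y_loc R st) ((\<lambda>e. emb [:e:]) ` E) \<Longrightarrow> x \<in> bracket_star R st E"
  unfolding bracket_star_def by simp
lemma bsD: "x \<in> bracket_star R st E \<Longrightarrow> emb [:x:] \<in> gen (D1Y_loc R st) ((\<lambda>e. emb [:e:]) ` E)"
  unfolding bracket_star_def by simp

lemma sub_bs: "E \<subseteq> bracket_star R st E"
proof
  fix x assume "x \<in> E"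
  then have "emb [:x:] \<in> (\<lambda>e. emb [:e:]) ` E" by blast
  from gen_base[OF this D1Y_loc_1] show "x \<in> bracket_star R st E" by (rule bsI)
qed

lemma bs_contr:
  assumes Q: "Q \<in> Delta1 R st" and x: "x \<in> bracket_star R st Q" "x \<in> D1 R"
  shows "x \<in> Q"
proof -
  obtain T c where T: "finite T" "T \<subseteq> (\<lambda>e. emb [:e:]) ` Q" "\<forall>t\<in>T. c t \<in> D1Y_loc R st"
      "emb [:x:] = (\<Sum>t\<in>T. c t * t)"
    using bsD[OF x(1)] by (rule genE)
  have "\<forall>t\<in>T. \<exists>w. fst w \<in> Q \<and> t = emb [:fst w:] \<and> fst (snd w) \<in> polys_over (D1 R) \<and>
          snd (snd w) \<in> S1 R st \<and> c t = emb (fst (snd w)) / emb (snd (snd w))"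
  proof
    fix t assume t: "t \<in> T"
    then obtain e where e: "e \<in> Q" "t = emb [:e:]" using T(2) by auto
    obtain f s where fs: "f \<in> polys_over (D1 R)" "s \<in> S1 R st" "c t = emb f / emb s"
      using T(3) t by (auto elim!: D1Y_locE)
    show "\<exists>w. fst w \<in> Q \<and> t = emb [:fst w:] \<and> fst (snd w) \<in> polys_over (D1 R) \<and>
          snd (snd w) \<in> S1 R st \<and> c t = emb (fst (snd w)) / emb (snd (snd w))"
      using e fs by (intro exI[of _ "(e, f, s)"]) simp
  qed
  from bchoice[OF this] obtain w where w: "\<forall>t\<in>T. fst (w t) \<in> Q \<and> t = emb [:fst (w t):] \<and> fst (snd (w t)) \<in> polys_over (D1 R) \<and>
          snd (snd (w t)) \<in> S1 R st \<and> c t = emb (fst (snd (w t))) / emb (snd (snd (w t)))" ..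
  define e where "e t = fst (w t)" for t
  define f where "f t = fst (snd (w t))" for t
  define s where "s t = snd (snd (w t))" for t
  have H: "\<forall>t\<in>T. s t \<in> polys_over (D1 R) \<and> s t \<notin> polys_over Q \<and> f t \<in> polys_over (D1 R) \<and> e t \<in> Q
              \<and> c t * emb (s t) = emb (f t)"
  proof
    fix t assume t: "t \<in> T"
    have "s t \<in> S1 R st" using w t unfolding s_def by auto
    then have "s t \<noteq> 0" using S1_nz by blast
    then show "s t \<in> polys_over (D1 R) \<and> s t \<notin> polys_over Q \<and> f t \<in> polys_over (D1 R) \<and> e t \<in> Q
              \<and> c t * emb (s t) = emb (f t)"
      using w t S1_sub S1_notin[OF _ Q] \<open>s t \<in> S1 R st\<close> unfolding s_def f_def e_def by auto
  qed
  have eq: "emb [:x:] = (\<Sum>t\<in>T. c t * emb [:e t:])"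
    unfolding T(4) e_def using w by (intro sum.cong) auto
  show ?thesis using clear_denoms[OF sr1 Delta_Spec[OF Q] T(1) H eq x(2)] .
qed

lemma Delta_quasi: "Q \<in> Delta1 R st \<Longrightarrow> Q \<noteq> {0} \<Longrightarrow> quasi_ideal (D1 R) (bracket_star R st) Q"
proof -
  assume Q: "Q \<in> Delta1 R st" and Q0: "Q \<noteq> {0}"
  have idQ: "is_ideal (D1 R) Q" using Spec_ideal[OF Delta_Spec[OF Q]] .
  have "bracket_star R st Q \<inter> D1 R \<subseteq> Q" using bs_contr[OF Q] by blast
  moreover have "Q \<subseteq> bracket_star R st Q \<inter> D1 R" using sub_bs[of Q] ideal_sub[OF idQ] by blast
  ultimately show ?thesis unfolding quasi_ideal_def using idQ Q0 by blast
qed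

lemma bs_colon:
  assumes a: "a \<in> D1 R" and x: "x \<in> bracket_star R st {y \<in> D1 R. y * a \<in> I}"
  shows "x * a \<in> bracket_star R st I"
proof -
  obtain T c where T: "finite T" "T \<subseteq> (\<lambda>e. emb [:e:]) ` {y \<in> D1 R. y * a \<in> I}" "\<forall>t\<in>T. c t \<in> D1Y_loc R st"
      "emb [:x:] = (\<Sum>t\<in>T. c t * t)"
    using bsD[OF x] by (rule genE)
  have "emb [:x * a:] = emb [:a:] * emb [:x:]" by (simp add: emb_mult[symmetric] mult.commute)
  also have "\<dots> = (\<Sum>t\<in>T. c t * (emb [:a:] * t))"
    unfolding T(4) sum_distrib_left by (rule sum.cong[OF refl]) (rule mult.left_commute)
  also have "\<dots> \<in> gen (D1Y_loc R st) ((\<lambda>e. emb [:e:]) ` I)"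
  proof (rule gen_sum[OF D1Y_loc_0 D1Y_loc_add T(1)], rule ballI)
    fix t assume t: "t \<in> T"
    then obtain e where e: "e \<in> D1 R" "e * a \<in> I" "t = emb [:e:]" using T(2) by auto
    have "emb [:a:] * t = emb [:e * a:]" using e by (simp add: emb_mult[symmetric] mult.commute)
    then show "c t \<in> D1Y_loc R st \<and> emb [:a:] * t \<in> (\<lambda>e. emb [:e:]) ` I" using T(3) t e by auto
  qed
  finally show ?thesis by (rule bsI)
qed

lemma bs_QMax_Spec:
  assumes I: "I \<in> QMax (D1 R) (bracket_star R st)"
  shows "I \<in> Spec (D1 R)"
proof -
  have qI: "quasi_ideal (D1 R) (bracket_star R st) I" "I \<noteq> D1 R"
   and maxI: "\<And>J. quasi_ideal (D1 R) (bracket_star R st) J \<Longrightarrow> J \<noteq> D1 R \<Longrightarrow> I \<subseteq> J \<Longrightarrow> J = I"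
    using I unfolding QMax_def by auto
  have idI: "is_ideal (D1 R) I" and I0: "I \<noteq> {0}" and Iq: "bracket_star R st I \<inter> D1 R = I"
    using qI unfolding quasi_ideal_def by auto
  have "a \<in> I \<or> b \<in> I" if ab: "a \<in> D1 R" "b \<in> D1 R" "a * b \<in> I" for a b
  proof (cases "a \<in> I")
    case True then show ?thesis by blast
  next
    case False
    note na = False
    define C where "C = {y \<in> D1 R. y * a \<in> I}"
    have IC: "I \<subseteq> C" unfolding C_def using ideal_sub[OF idI] ideal_mult2[OF idI ab(1)] by auto
    have idC: "is_ideal (D1 R) C" unfolding is_ideal_def C_def
      using ideal_0[OF idI] ideal_add[OF idI] ideal_mult[OF idI] sr1
      by (auto simp: distrib_right mult.assoc subring_of_def)
    have CR: "C \<noteq> D1 R"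
    proof
      assume "C = D1 R"
      then have "1 \<in> C" using subring_1[OF sr1] by simp
      then show False using na unfolding C_def by simp
    qed
    have C0: "C \<noteq> {0}"
    proof
      assume "C = {0}"
      then have "I \<subseteq> {0}" using IC by simp
      then show False using I0 ideal_0[OF idI] by blast
    qed
    have "bracket_star R st C \<inter> D1 R \<subseteq> C"
    proof
      fix x assume x: "x \<in> bracket_star R st C \<inter> D1 R"
      then have "x * a \<in> bracket_star R st I" using bs_colon[OF ab(1)] unfolding C_def by blast
      moreover have "x * a \<in> D1 R" using x ab(1) subring_mult[OF sr1] by blast
      ultimately have "x * a \<in> I" using Iq by blast
      then show "x \<in> C" unfolding C_def using x by blast
    qed
    moreover have "C \<subseteq> bracket_star R st C \<inter> D1 R" using sub_bs[of C] ideal_sub[OF idC] by blast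
    ultimately have "quasi_ideal (D1 R) (bracket_star R st) C"
      unfolding quasi_ideal_def using idC C0 by blast
    then have CI: "C = I" using maxI CR IC by blast
    have "b \<in> C" using ab unfolding C_def by (simp add: mult.commute)
    then show ?thesis using CI by simp
  qed
  then show ?thesis unfolding Spec_def using idI qI(2) by blast
qed

lemma monom_const_mult: "monom 1 j * [:c::'a::comm_ring_1:] = monom c j"
  by (simp add: mult.commute smult_monom)

lemma S1_contra:
  assumes J: "quasi_ideal (D1 R) (bracket_star R st) J" "J \<noteq> D1 R"
    and f: "f \<in> S1 R st" "f \<in> polys_over J"
  shows False
proof -
  have idJ: "is_ideal (D1 R) J" and Jq: "bracket_star R st J \<inter> D1 R = J" using J unfolding quasi_ideal_def by auto
  have fnz: "emb f \<noteq> 0" using S1_nz[OF f(1)] by simp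
  have "emb [:1:] = (\<Sum>j\<le>degree f. (emb (monom 1 j) / emb f) * emb [:coeff f j:])"
  proof -
    have "(\<Sum>j\<le>degree f. (emb (monom 1 j) / emb f) * emb [:coeff f j:])
        = (\<Sum>j\<le>degree f. emb (monom (coeff f j) j)) / emb f"
      unfolding sum_divide_distrib
      by (rule sum.cong[OF refl]) (simp only: times_divide_eq_left emb_mult[symmetric] monom_const_mult)
    also have "\<dots> = emb f / emb f" unfolding emb_sum[symmetric] poly_as_sum_of_monoms ..
    finally show ?thesis using fnz by (simp add: one_pCons[symmetric])
  qed
  also have "\<dots> \<in> gen (D1Y_loc R st) ((\<lambda>e. emb [:e:]) ` J)"
  proof (rule gen_sum[OF D1Y_loc_0 D1Y_loc_add], simp, rule ballI)
    fix j assume "j \<in> {..degree f}"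
    have "monom 1 j \<in> polys_over (D1 R)" using polys_over_monom subring_0[OF sr1] subring_1[OF sr1] by blast
    then have "emb (monom 1 j) / emb f \<in> D1Y_loc R st" using D1Y_locI f(1) by blast
    moreover have "coeff f j \<in> J" using polys_overD[OF f(2)] .
    ultimately show "emb (monom 1 j) / emb f \<in> D1Y_loc R st \<and> emb [:coeff f j:] \<in> (\<lambda>e. emb [:e:]) ` J" by blast
  qed
  finally have "1 \<in> bracket_star R st J" by (rule bsI)
  then have "1 \<in> J" using Jq subring_1[OF sr1] by blast
  then show False using ideal_one[OF idJ] J(2) by blast
qed

end

lemma gen_finite_support:
  "finite S0 \<Longrightarrow> S0 \<subseteq> gen R C \<Longrightarrow> \<exists>C'. finite C' \<and> C' \<subseteq> C \<and> S0 \<subseteq> gen R C'"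
proof (induction S0 rule: finite_induct)
  case empty then show ?case by auto
next
  case (insert x S0)
  then obtain C1 where C1: "finite C1" "C1 \<subseteq> C" "S0 \<subseteq> gen R C1" by auto
  obtain T c where T: "finite T" "T \<subseteq> C" "\<forall>s\<in>T. c s \<in> R" "x = (\<Sum>s\<in>T. c s * s)"
    using insert(4) by (auto elim: genE)
  have "x \<in> gen R (C1 \<union> T)" using genI[of T "C1 \<union> T" c R] T by auto
  moreover have "S0 \<subseteq> gen R (C1 \<union> T)" using C1(3) gen_mono[of C1 "C1 \<union> T" R] by auto
  ultimately show ?case using C1 T by (intro exI[of _ "C1 \<union> T"]) auto
qed

lemma finite_range_coeff: "finite (range (coeff p))"
proof -
  have "range (coeff p) \<subseteq> insert 0 (coeff p ` {..degree p})"
  proof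
    fix x assume "x \<in> range (coeff p)"
    then obtain i where "x = coeff p i" by auto
    then show "x \<in> insert 0 (coeff p ` {..degree p})" by (cases "i \<le> degree p") (auto simp: coeff_eq_0)
  qed
  then show ?thesis by (rule finite_subset) simp
qed

context ssr begin

lemma find_S1:
  assumes J: "is_ideal (D1 R) J" and d: "d \<in> R" "d \<noteq> 0" "embK d \<in> J"
    and c: "star_f R st (content_ideal R J) = st R"
  shows "\<exists>f. f \<in> S1 R st \<and> f \<in> polys_over J"
proof -
  have "1 \<in> st R" using st_ext[OF R_submod] subring_1[OF sr] by blast
  then have "1 \<in> star_f R st (content_ideal R J)" using c by simp
  then obtain F where F: "fg_frac R F" "F \<subseteq> content_ideal R J" "1 \<in> st F" by (auto elim: star_fE)
  obtain S0 where S0: "finite S0" "F = gen R S0" using F(1) unfolding fg_frac_def by auto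
  define C where "C = {coeff p i | p i. emb p \<in> J}"
  have "S0 \<subseteq> F" using S0(2) gen_base subring_1[OF sr] by blast
  then have "S0 \<subseteq> gen R C" using F(2) unfolding content_ideal_def C_def by blast
  from gen_finite_support[OF S0(1) this] obtain C' where C': "finite C'" "C' \<subseteq> C" "S0 \<subseteq> gen R C'" by blast
  have "\<forall>c\<in>C'. \<exists>p. emb p \<in> J \<and> c \<in> range (coeff p)"
  proof
    fix x assume "x \<in> C'"
    then have "x \<in> C" using C'(2) by blast
    then obtain p i where "x = coeff p i" "emb p \<in> J" unfolding C_def by blast
    then show "\<exists>p. emb p \<in> J \<and> x \<in> range (coeff p)" by blast
  qed
  from bchoice[OF this] obtain pick where pick: "\<forall>c\<in>C'. emb (pick c) \<in> J \<and> c \<in> range (coeff (pick c))" ..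
  define P0 where "P0 = insert [:d:] (pick ` C')"
  have finP0: "finite P0" unfolding P0_def using C'(1) by simp
  have P0J: "\<forall>p\<in>P0. emb p \<in> J" unfolding P0_def using pick d(3) unfolding embK_def by auto
  define C0 where "C0 = (\<Union>p\<in>P0. range (coeff p))"
  have finC0: "finite C0" unfolding C0_def using finP0 finite_range_coeff by blast
  have "C' \<subseteq> C0"
  proof
    fix x assume x: "x \<in> C'"
    then have "pick x \<in> P0" "x \<in> range (coeff (pick x))" using pick unfolding P0_def by auto
    then show "x \<in> C0" unfolding C0_def by blast
  qed
  define G where "G = gen R C0"
  have "F \<subseteq> G"
  proof -
    have "S0 \<subseteq> gen R C0" using C'(3) gen_mono[OF \<open>C' \<subseteq> C0\<close>, of R] by blast
    then have "gen R S0 \<subseteq> gen R (gen R C0)" by (rule gen_mono)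
    then show ?thesis unfolding S0(2) G_def gen_gen[OF sr] .
  qed
  obtain xs where xs: "set xs = P0" using finite_list[OF finP0] by blast
  define f where "f = (\<Sum>j<length xs. monom (emb (xs ! j)) j)"
  have cf: "coeff f i = (if i < length xs then emb (xs ! i) else 0)" for i
    unfolding f_def coeff_sum coeff_monom by (simp add: sum.delta)
  have fJ: "f \<in> polys_over J"
    by (rule polys_overI) (use P0J xs ideal_0[OF J] in \<open>auto simp: cf\<close>)
  have "f \<in> S1 R st"
  proof (rule S1I)
    show "f \<in> polys_over (D1 R)" using fJ polys_over_mono[OF ideal_sub[OF J]] by blast
  next
    fix Q assume Q: "Q \<in> Delta1 R st"
    show "f \<notin> polys_over Q"
    proof
      assume fQ: "f \<in> polys_over Q"
      have P0Q: "emb p \<in> Q" if p: "p \<in> P0" for p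
      proof -
        obtain i where "i < length xs" "xs ! i = p" using p xs by (metis in_set_conv_nth)
        then show ?thesis using polys_overD[OF fQ, of i] cf by simp
      qed
      have QS: "Q \<in> Spec (D1 R)" and
        cases: "contr R Q = {0} \<or> (Q = extX (contr R Q) \<and> star_f R st (contr R Q) \<subset> st R)"
        using Q unfolding Delta1_def by auto
      from cases show False
      proof
        assume c0: "contr R Q = {0}"
        have "emb [:d:] \<in> Q" using P0Q unfolding P0_def by simp
        then have "d \<in> contr R Q" using d(1) unfolding contr_def embK_def by simp
        then show False using c0 d(2) by simp
      next
        assume h: "Q = extX (contr R Q) \<and> star_f R st (contr R Q) \<subset> st R"
        define P' where "P' = contr R Q"
        have idP': "is_ideal R P'" unfolding P'_def using contr_ideal[OF Spec_ideal[OF QS]] .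
        have "C0 \<subseteq> P'"
        proof
          fix x assume "x \<in> C0"
          then obtain p i where p: "p \<in> P0" "x = coeff p i" unfolding C0_def by auto
          have "emb p \<in> extX P'" using P0Q[OF p(1)] h unfolding P'_def by simp
          then have "p \<in> polys_over P'" by simp
          then show "x \<in> P'" using p(2) polys_overD by blast
        qed
        then have GP: "G \<subseteq> P'" unfolding G_def by (rule gen_subset_ideal[OF idP'])
        have "F \<noteq> {0}" using F(1) unfolding fg_frac_def by blast
        then have "G \<noteq> {0}" using \<open>F \<subseteq> G\<close> gen_0[of R S0] S0(2) by blast
        then have fgG: "fg_frac R G" unfolding fg_frac_def G_def using finC0 by blast
        have "st F \<subseteq> st G" using st_mono[OF fg_frac_submod[OF F(1)] fg_frac_submod[OF fgG] \<open>F \<subseteq> G\<close>] .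
        then have "1 \<in> st G" using F(3) by blast
        then have "st R \<subseteq> st G" using one_st[OF fg_frac_submod[OF fgG]] by blast
        moreover have "st G \<subseteq> star_f R st P'" using star_fI[OF fgG GP] by blast
        ultimately show False using h unfolding P'_def by blast
      qed
    qed
  qed
  then show ?thesis using fJ by blast
qed

end

lemma clear1:
  fixes R :: "'f::field set"
  assumes sr: "subring_of R" and qf: "is_quotient_field_of R"
  shows "\<exists>d\<in>R. d \<noteq> 0 \<and> smult d u \<in> polys_over R"
proof (induction u)
  case 0
  show ?case using subring_1[OF sr] polys_over_0[OF subring_0[OF sr]] by (intro bexI[of _ 1]) auto
next
  case (pCons a p)
  then obtain d' where d': "d' \<in> R" "d' \<noteq> 0" "smult d' p \<in> polys_over R" by blast
  obtain x y where xy: "x \<in> R" "y \<in> R" "y \<noteq> 0" "a = x / y" using qf unfolding is_quotient_field_of_def by blast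
  have "smult (y * d') (pCons a p) = pCons (d' * x) (smult y (smult d' p))"
    using xy by (simp add: field_simps)
  moreover have "pCons (d' * x) (smult y (smult d' p)) \<in> polys_over R"
  proof (rule polys_overI)
    fix i show "coeff (pCons (d' * x) (smult y (smult d' p))) i \<in> R"
      using subring_mult[OF sr] xy d' polys_overD[OF d'(3)]
      by (cases i) (auto simp: coeff_pCons mult.assoc)
  qed
  ultimately show ?case using subring_mult[OF sr xy(2) d'(1)] xy(3) d'(2) by (intro bexI[of _ "y * d'"]) (auto simp: mult_ac)
qed

lemma emb_diff: "emb (a - b) = emb a - emb b" by (simp add: emb_def)

context ssr begin

lemma upper_zero:
  assumes qf: "is_quotient_field_of R" and Q: "Q \<in> Spec (D1 R)" "contr R Q = {0}" "Q \<noteq> {0}"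
    and J: "is_ideal (D1 R) J" "Q \<subseteq> J" "J \<noteq> Q"
  shows "\<exists>e. e \<in> R \<and> e \<noteq> 0 \<and> embK e \<in> J"
proof -
  have idQ: "is_ideal (D1 R) Q" using Spec_ideal[OF Q(1)] .
  have clr: "\<And>u. \<exists>d\<in>R. d \<noteq> 0 \<and> smult d u \<in> polys_over R" using clear1[OF sr qf] .
  have Qmult: "emb (p * g) \<in> Q" if "p \<in> polys_over R" "emb g \<in> Q" for p g
    using ideal_mult[OF idQ _ that(2), of "emb p"] that(1) by (simp add: emb_mult)
  have Jmult: "emb (p * g) \<in> J" if "p \<in> polys_over R" "emb g \<in> J" for p g
    using ideal_mult[OF J(1) _ that(2), of "emb p"] that(1) by (simp add: emb_mult)
  have Qprime: "emb p \<in> Q \<or> emb g \<in> Q" if "p \<in> polys_over R" "g \<in> polys_over R" "emb (p * g) \<in> Q" for p g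
    using Spec_prime[OF Q(1), of "emb p" "emb g"] that by (simp add: emb_mult)
  have const: "emb [:c:] \<notin> Q" if "c \<in> R" "c \<noteq> 0" for c
    using Q(2) that unfolding contr_def embK_def by auto
  have cpoly: "[:c:] \<in> polys_over R" if "c \<in> R" for c using polys_over_const[OF subring_0[OF sr]] that by blast
  have smult_eq: "smult c p = [:c:] * p" for c and p :: "'f poly" by simp
  obtain x0 where x0: "x0 \<in> Q" "x0 \<noteq> 0" using Q(3) ideal_0[OF idQ] by blast
  then obtain q0 where "q0 \<in> polys_over R" "x0 = emb q0" using ideal_sub[OF idQ] by (auto elim: D1E)
  then have "q0 \<in> polys_over R \<and> q0 \<noteq> 0 \<and> emb q0 \<in> Q" using x0 by auto
  from ex_has_least_nat[of "\<lambda>q. q \<in> polys_over R \<and> q \<noteq> 0 \<and> emb q \<in> Q", OF this, of degree]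
  obtain q where q: "q \<in> polys_over R" "q \<noteq> 0" "emb q \<in> Q"
    and qmin: "\<And>g. g \<in> polys_over R \<Longrightarrow> g \<noteq> 0 \<Longrightarrow> emb g \<in> Q \<Longrightarrow> degree q \<le> degree g" by blast
  have claimA: "q dvd g" if g: "g \<in> polys_over R" "emb g \<in> Q" for g
  proof -
    obtain d where d: "d \<in> R" "d \<noteq> 0" "smult d (g div q) \<in> polys_over R" using clr by blast
    have eq: "smult d (g mod q) = smult d g - smult d (g div q) * q"
      using div_mult_mod_eq[of g q] by (metis add_diff_cancel_left' smult_add_right mult_smult_left)
    have inR: "smult d (g mod q) \<in> polys_over R"
      unfolding eq using polys_over_sr_diff[OF sr1] polys_over_smult[OF sr d(1) g(1)]
        polys_over_sr_mult[OF sr d(3) q(1)] by (simp add: polys_over_sr_diff[OF sr])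
    have "emb (smult d g) \<in> Q" unfolding smult_eq using Qmult[OF cpoly[OF d(1)] g(2)] .
    moreover have "emb (smult d (g div q) * q) \<in> Q" using Qmult[OF d(3) q(3)] .
    ultimately have inQ: "emb (smult d (g mod q)) \<in> Q"
      unfolding eq emb_diff by (rule ideal_diff[OF sr1 idQ])
    show ?thesis
    proof (rule ccontr)
      assume "\<not> q dvd g"
      then have "g mod q \<noteq> 0" by (simp add: dvd_eq_mod_eq_0)
      then have "degree (g mod q) < degree q" using degree_mod_less[OF q(2), of g] by simp
      moreover have "smult d (g mod q) \<noteq> 0" using d(2) \<open>g mod q \<noteq> 0\<close> by simp
      ultimately show False using qmin[OF inR _ inQ] by simp
    qed
  qed
  have claimB: "emb g \<in> Q" if g: "g \<in> polys_over R" "q dvd g" for g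
  proof -
    obtain u where u: "g = q * u" using g(2) by blast
    obtain d where d: "d \<in> R" "d \<noteq> 0" "smult d u \<in> polys_over R" using clr by blast
    have "emb (smult d u * q) \<in> Q" using Qmult[OF d(3) q(3)] .
    moreover have "smult d u * q = [:d:] * g" using u by (simp add: mult.commute)
    ultimately have "emb ([:d:] * g) \<in> Q" by simp
    then show ?thesis using Qprime[OF cpoly[OF d(1)] g(1)] const[OF d(1,2)] by blast
  qed
  obtain j where j: "j \<in> J" "j \<notin> Q" using J(2,3) by blast
  then obtain jp where jp: "jp \<in> polys_over R" "j = emb jp" using ideal_sub[OF J(1)] by (auto elim: D1E)
  have njp: "\<not> q dvd jp" using claimB[OF jp(1)] j jp by blast
  define M where "M = {x * q + y * jp | x y. True}"
  have "q = 1 * q + 0 * jp" by simp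
  then have "q \<in> M" unfolding M_def by blast
  then have "q \<in> M \<and> q \<noteq> 0" using q(2) by blast
  from ex_has_least_nat[of "\<lambda>h. h \<in> M \<and> h \<noteq> 0", OF this, of degree]
  obtain h where h: "h \<in> M" "h \<noteq> 0" and hmin: "\<And>g. g \<in> M \<Longrightarrow> g \<noteq> 0 \<Longrightarrow> degree h \<le> degree g" by blast
  obtain x y where xy: "h = x * q + y * jp" using h(1) unfolding M_def by blast
  have hdvd: "h dvd g" if gM: "g \<in> M" for g
  proof -
    obtain a b where ab: "g = a * q + b * jp" using gM unfolding M_def by blast
    have "g mod h = g - (g div h) * h" using div_mult_mod_eq[of g h] by (metis add_diff_cancel_left')
    also have "\<dots> = (a - (g div h) * x) * q + (b - (g div h) * y) * jp" unfolding ab xy by (simp add: algebra_simps)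
    finally have "g mod h \<in> M" unfolding M_def by blast
    show ?thesis
    proof (rule ccontr)
      assume "\<not> h dvd g"
      then have "g mod h \<noteq> 0" by (simp add: dvd_eq_mod_eq_0)
      then show False using degree_mod_less[OF h(2), of g] hmin[OF \<open>g mod h \<in> M\<close>] by simp
    qed
  qed
  have hq: "h dvd q" using hdvd[OF \<open>q \<in> M\<close>] .
  have "jp = 0 * q + 1 * jp" by simp
  then have "jp \<in> M" unfolding M_def by blast
  then have hj: "h dvd jp" using hdvd by blast
  have degh: "degree h = 0"
  proof -
    obtain w where w: "q = h * w" using hq by blast
    have w0: "w \<noteq> 0" using w q(2) by auto
    obtain d1 where d1: "d1 \<in> R" "d1 \<noteq> 0" "smult d1 h \<in> polys_over R" using clr by blast
    obtain d2 where d2: "d2 \<in> R" "d2 \<noteq> 0" "smult d2 w \<in> polys_over R" using clr by blast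
    have "emb ([:d1 * d2:] * q) \<in> Q" using Qmult[OF cpoly[OF subring_mult[OF sr d1(1) d2(1)]] q(3)] .
    moreover have "[:d1 * d2:] * q = smult d1 h * smult d2 w" using w by (simp add: algebra_simps)
    ultimately have "emb (smult d1 h * smult d2 w) \<in> Q" by simp
    then have "emb (smult d1 h) \<in> Q \<or> emb (smult d2 w) \<in> Q" using Qprime[OF d1(3) d2(3)] by blast
    then show ?thesis
    proof
      assume "emb (smult d1 h) \<in> Q"
      then have "q dvd smult d1 h" using claimA[OF d1(3)] by blast
      moreover have "smult d1 h dvd smult d1 jp" using hj d1(2) by (simp add: smult_dvd_iff dvd_smult)
      ultimately have "q dvd smult d1 jp" by (rule dvd_trans)
      then have "emb (smult d1 jp) \<in> Q" using claimB polys_over_smult[OF sr d1(1) jp(1)] by blast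
      then have "emb ([:d1:] * jp) \<in> Q" by simp
      then have "emb jp \<in> Q" using Qprime[OF cpoly[OF d1(1)] jp(1)] const[OF d1(1,2)] by blast
      then show ?thesis using j jp by simp
    next
      assume "emb (smult d2 w) \<in> Q"
      then have "q dvd smult d2 w" using claimA[OF d2(3)] by blast
      then have "h * w dvd [:d2:] * w" using w by (simp add: mult.commute)
      then have "h dvd [:d2:]" using dvd_times_right_cancel_iff[OF w0, of h "[:d2:]"] by blast
      then have "degree h \<le> degree [:d2:]" by (rule dvd_imp_degree_le) (simp add: d2(2))
      then show ?thesis by simp
    qed
  qed
  define c where "c = coeff h 0"
  have hc: "h = [:c:]" unfolding c_def using degree_0_id[OF degh] by simp
  have c0: "c \<noteq> 0" using h(2) hc by auto
  obtain d3 where d3: "d3 \<in> R" "d3 \<noteq> 0" "smult d3 x \<in> polys_over R" using clr by blast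
  obtain d4 where d4: "d4 \<in> R" "d4 \<noteq> 0" "smult d4 y \<in> polys_over R" using clr by blast
  have qJ: "emb q \<in> J" using q(3) J(2) by blast
  have jJ: "emb jp \<in> J" using j jp by simp
  define P where "P = smult d4 (smult d3 x) * q + smult d3 (smult d4 y) * jp"
  have "P = smult (d3 * d4) (x * q + y * jp)" unfolding P_def
    by (simp only: smult_add_right mult_smult_left smult_smult) (simp add: mult.commute)
  also have "\<dots> = smult (d3 * d4) [:c:]" using xy hc by simp
  finally have P_eq: "P = [:d3 * d4 * c:]" by simp
  have p1: "smult d4 (smult d3 x) * q \<in> polys_over R"
    using polys_over_sr_mult[OF sr polys_over_smult[OF sr d4(1) d3(3)] q(1)] .
  have p2: "smult d3 (smult d4 y) * jp \<in> polys_over R"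
    using polys_over_sr_mult[OF sr polys_over_smult[OF sr d3(1) d4(3)] jp(1)] .
  have "P \<in> polys_over R" unfolding P_def using polys_over_sr_add[OF sr p1 p2] .
  then have inR: "d3 * d4 * c \<in> R" using P_eq polys_over_const[OF subring_0[OF sr]] by simp
  have "emb P \<in> J" unfolding P_def emb_add
    using ideal_add[OF J(1) Jmult[OF polys_over_smult[OF sr d4(1) d3(3)] qJ] Jmult[OF polys_over_smult[OF sr d3(1) d4(3)] jJ]] .
  then have "embK (d3 * d4 * c) \<in> J" unfolding embK_def P_eq .
  then show ?thesis using inR d3(2) d4(2) c0 by (intro exI[of _ "d3 * d4 * c"]) simp
qed

end

context ssr begin

lemma content_ideal_ideal:
  assumes J: "is_ideal (D1 R) J"
  shows "is_ideal R (content_ideal R J)"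
proof -
  have CR: "{coeff p i | p i. emb p \<in> J} \<subseteq> R"
  proof
    fix x assume "x \<in> {coeff p i | p i. emb p \<in> J}"
    then obtain p i where "x = coeff p i" "emb p \<in> J" by blast
    then have "p \<in> polys_over R" using ideal_sub[OF J] emb_D1 by blast
    then show "x \<in> R" using \<open>x = coeff p i\<close> polys_overD by blast
  qed
  have m: "\<forall>r\<in>R. \<forall>x\<in>R. r * x \<in> R" using subring_mult[OF sr] by blast
  have sub: "content_ideal R J \<subseteq> R" unfolding content_ideal_def
    by (rule gen_least[OF subring_0[OF sr] subring_add[OF sr] m CR])
  note gc = gen_closed[OF sr, of "{coeff p i | p i. emb p \<in> J}"]
  show ?thesis unfolding is_ideal_def
  proof (intro conjI)
    show "content_ideal R J \<subseteq> R" by (rule sub)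
    show "0 \<in> content_ideal R J" unfolding content_ideal_def by (rule gc(1))
    show "\<forall>x\<in>content_ideal R J. \<forall>y\<in>content_ideal R J. x + y \<in> content_ideal R J"
      unfolding content_ideal_def by (rule gc(2))
    show "\<forall>r\<in>R. \<forall>x\<in>content_ideal R J. r * x \<in> content_ideal R J"
      unfolding content_ideal_def by (rule gc(3))
  qed
qed

lemma in_content: "emb p \<in> J \<Longrightarrow> coeff p i \<in> content_ideal R J"
proof -
  assume "emb p \<in> J"
  then have "coeff p i \<in> {coeff p i | p i. emb p \<in> J}" by blast
  from gen_base[OF this subring_1[OF sr]] show ?thesis unfolding content_ideal_def .
qed

lemma content_mono: "J \<subseteq> J' \<Longrightarrow> content_ideal R J \<subseteq> content_ideal R J'"
  unfolding content_ideal_def by (rule gen_mono) (use in blast)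

lemma content_nz:
  assumes J: "is_ideal (D1 R) J" "J \<noteq> {0}"
  shows "content_ideal R J \<noteq> {0}"
proof -
  obtain x where x: "x \<in> J" "x \<noteq> 0" using J ideal_0 by blast
  then obtain p where p: "x = emb p" using ideal_sub[OF J(1)] by (auto elim: D1E)
  then have "p \<noteq> 0" using x by auto
  then obtain i where "coeff p i \<noteq> 0" by (metis leading_coeff_0_iff)
  moreover have "coeff p i \<in> content_ideal R J" using in_content x p by blast
  ultimately show ?thesis by blast
qed

lemma content_sub_extX:
  assumes J: "is_ideal (D1 R) J" and P: "content_ideal R J \<subseteq> P"
  shows "J \<subseteq> extX P"
proof
  fix x assume "x \<in> J"
  then obtain p where p: "p \<in> polys_over R" "x = emb p" using ideal_sub[OF J] by (auto elim: D1E)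
  have "p \<in> polys_over P" using in_content[of p J] \<open>x \<in> J\<close> p P by (intro polys_overI) blast
  then show "x \<in> extX P" using p by simp
qed

lemma noS1:
  assumes J: "quasi_ideal (D1 R) (bracket_star R st) J" "J \<noteq> D1 R"
    and c: "contr R J \<noteq> {0}" and s: "star_f R st (content_ideal R J) = st R"
  shows False
proof -
  have idJ: "is_ideal (D1 R) J" using J unfolding quasi_ideal_def by blast
  have "0 \<in> contr R J" using ideal_0[OF contr_ideal[OF idJ]] .
  then obtain d where d: "d \<in> contr R J" "d \<noteq> 0" using c by blast
  then have "d \<in> R" "embK d \<in> J" unfolding contr_def by auto
  then obtain f where "f \<in> S1 R st" "f \<in> polys_over J" using find_S1[OF idJ _ d(2) _ s] by blast
  then show False using S1_contra[OF J] by blast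
qed

lemma get_QMax:
  assumes J: "is_ideal (D1 R) J" "J \<noteq> {0}" and s: "star_f R st (content_ideal R J) \<noteq> st R"
  shows "\<exists>P \<in> QMax R (star_f R st). J \<subseteq> extX P"
proof -
  have cI: "is_ideal R (content_ideal R J)" "content_ideal R J \<noteq> {0}"
    using content_ideal_ideal[OF J(1)] content_nz[OF J] by auto
  note K = star_f_closure_quasi[OF cI s]
  obtain P where P: "P \<in> QMax R (star_f R st)" "star_f R st (content_ideal R J) \<inter> R \<subseteq> P"
    using QMax_exists[OF K(1,2)] by blast
  have "content_ideal R J \<subseteq> P" using K(3) P(2) by blast
  then show ?thesis using content_sub_extX[OF J(1)] P(1) by blast
qed

lemma extX_quasi:
  assumes P: "P \<in> QMax R (star_f R st)"
  shows "quasi_ideal (D1 R) (bracket_star R st) (extX P)" "extX P \<noteq> D1 R"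
proof -
  have qP: "quasi_ideal R (star_f R st) P" using P unfolding QMax_def by blast
  then obtain p where p: "p \<in> P" "p \<noteq> 0" using ideal_0 unfolding quasi_ideal_def by blast
  have "emb [:p:] \<in> extX P" using polys_over_const[OF ideal_0, of R P p] qP p unfolding quasi_ideal_def by simp
  moreover have "emb [:p:] \<noteq> 0" using p by simp
  ultimately have "extX P \<noteq> {0}" by blast
  then show "quasi_ideal (D1 R) (bracket_star R st) (extX P)" using Delta_quasi[OF QMax_Delta[OF P]] by blast
  show "extX P \<noteq> D1 R" using Spec_ne[OF extX_Spec[OF QMax_Spec[OF P]]] .
qed

lemma st_R_ne: "1 \<in> st R"
  using st_ext[OF R_submod] subring_1[OF sr] by blast

lemma main:
  assumes qf: "is_quotient_field_of R"
  shows "QMax (D1 R) (bracket_star R st) =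
           {Q \<in> Spec (D1 R). contr R Q = {0} \<and> star_f R st (content_ideal R Q) = st R}
           \<union> {extX P | P. P \<in> QMax R (star_f R st)}"
proof (intro equalityI subsetI)
  fix I assume I: "I \<in> QMax (D1 R) (bracket_star R st)"
  have qI: "quasi_ideal (D1 R) (bracket_star R st) I" "I \<noteq> D1 R"
   and maxI: "\<And>J. quasi_ideal (D1 R) (bracket_star R st) J \<Longrightarrow> J \<noteq> D1 R \<Longrightarrow> I \<subseteq> J \<Longrightarrow> J = I"
    using I unfolding QMax_def by auto
  have idI: "is_ideal (D1 R) I" "I \<noteq> {0}" using qI unfolding quasi_ideal_def by auto
  have SI: "I \<in> Spec (D1 R)" using bs_QMax_Spec[OF I] .
  show "I \<in> {Q \<in> Spec (D1 R). contr R Q = {0} \<and> star_f R st (content_ideal R Q) = st R}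
           \<union> {extX P | P. P \<in> QMax R (star_f R st)}"
  proof (cases "contr R I = {0} \<and> star_f R st (content_ideal R I) = st R")
    case True then show ?thesis using SI by blast
  next
    case False
    have ne: "star_f R st (content_ideal R I) \<noteq> st R"
    proof
      assume eq: "star_f R st (content_ideal R I) = st R"
      then have "contr R I \<noteq> {0}" using False by blast
      then show False using noS1[OF qI _ eq] by blast
    qed
    obtain P where P: "P \<in> QMax R (star_f R st)" "I \<subseteq> extX P" using get_QMax[OF idI ne] by blast
    have "extX P = I" using maxI[OF extX_quasi[OF P(1)] P(2)] .
    then show ?thesis using P(1) by blast
  qed
next
  fix I assume "I \<in> {Q \<in> Spec (D1 R). contr R Q = {0} \<and> star_f R st (content_ideal R Q) = st R}
           \<union> {extX P | P. P \<in> QMax R (star_f R st)}"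
  then consider (A) "I \<in> Spec (D1 R)" "contr R I = {0}" "star_f R st (content_ideal R I) = st R"
    | (B) P where "P \<in> QMax R (star_f R st)" "I = extX P" by blast
  then show "I \<in> QMax (D1 R) (bracket_star R st)"
  proof cases
    case A
    have Delta: "I \<in> Delta1 R st" unfolding Delta1_def using A by blast
    have I0: "I \<noteq> {0}"
    proof
      assume I0: "I = {0}"
      have "content_ideal R I \<subseteq> {0}" unfolding content_ideal_def I0
        by (rule gen_least) (auto)
      then have "star_f R st (content_ideal R I) = {}"
      proof -
        assume sub: "content_ideal R I \<subseteq> {0}"
        have False if x: "x \<in> star_f R st (content_ideal R I)" for x
        proof -
          obtain F where F: "fg_frac R F" "F \<subseteq> content_ideal R I" using x by (auto elim: star_fE)
          obtain S where "F = gen R S" "F \<noteq> {0}" using F(1) unfolding fg_frac_def by blast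
          then show False using gen_0[of R S] F(2) sub by blast
        qed
        then show ?thesis by blast
      qed
      then show False using A(3) st_R_ne by blast
    qed
    have qI: "quasi_ideal (D1 R) (bracket_star R st) I" using Delta_quasi[OF Delta I0] .
    have neI: "I \<noteq> D1 R" using Spec_ne[OF A(1)] .
    have "J = I" if J: "quasi_ideal (D1 R) (bracket_star R st) J" "J \<noteq> D1 R" "I \<subseteq> J" for J
    proof (rule ccontr)
      assume JI: "J \<noteq> I"
      have idJ: "is_ideal (D1 R) J" using J(1) unfolding quasi_ideal_def by blast
      obtain e where e: "e \<in> R" "e \<noteq> 0" "embK e \<in> J" using upper_zero[OF qf A(1,2) I0 idJ J(3) JI] by blast
      have "contr R J \<noteq> {0}" using e unfolding contr_def by blast
      moreover have "star_f R st (content_ideal R J) = st R"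
      proof
        show "star_f R st (content_ideal R J) \<subseteq> st R"
          using star_f_le[OF ideal_sub[OF content_ideal_ideal[OF idJ]]] .
        show "st R \<subseteq> star_f R st (content_ideal R J)"
          using A(3) star_f_mono[OF content_mono[OF J(3)]] by blast
      qed
      ultimately show False using noS1[OF J(1,2)] by blast
    qed
    then show ?thesis unfolding QMax_def using qI neI by blast
  next
    case B
    note qE = extX_quasi[OF B(1)]
    have qP: "quasi_ideal R (star_f R st) P" "P \<noteq> R"
     and maxP: "\<And>K. quasi_ideal R (star_f R st) K \<Longrightarrow> K \<noteq> R \<Longrightarrow> P \<subseteq> K \<Longrightarrow> K = P"
      using B(1) unfolding QMax_def by auto
    have idP: "is_ideal R P" "P \<noteq> {0}" using qP unfolding quasi_ideal_def by auto
    have "J = I" if J: "quasi_ideal (D1 R) (bracket_star R st) J" "J \<noteq> D1 R" "I \<subseteq> J" for J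
    proof -
      have idJ: "is_ideal (D1 R) J" "J \<noteq> {0}" using J(1) unfolding quasi_ideal_def by auto
      have PJ: "\<And>p. p \<in> P \<Longrightarrow> emb [:p:] \<in> J"
        using J(3) B(2) polys_over_const[OF ideal_0[OF idP(1)]] by auto
      obtain p where p: "p \<in> P" "p \<noteq> 0" using idP ideal_0 by blast
      have "p \<in> contr R J" using PJ[OF p(1)] ideal_sub[OF idP(1)] p(1) unfolding contr_def embK_def by auto
      then have cJ: "contr R J \<noteq> {0}" using p(2) by blast
      have ne: "star_f R st (content_ideal R J) \<noteq> st R" using noS1[OF J(1,2) cJ] by blast
      have cI: "is_ideal R (content_ideal R J)" "content_ideal R J \<noteq> {0}"
        using content_ideal_ideal[OF idJ(1)] content_nz[OF idJ] by auto
      note K = star_f_closure_quasi[OF cI ne]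
      have "P \<subseteq> content_ideal R J"
      proof
        fix x assume "x \<in> P"
        then have "coeff [:x:] 0 \<in> content_ideal R J" using in_content PJ by blast
        then show "x \<in> content_ideal R J" by simp
      qed
      then have "star_f R st (content_ideal R J) \<inter> R = P" using maxP[OF K(1,2)] K(3) by blast
      then have "content_ideal R J \<subseteq> P" using K(3) by blast
      then have "J \<subseteq> I" using content_sub_extX[OF idJ(1)] B(2) by blast
      then show "J = I" using J(3) by blast
    qed
    then show ?thesis unfolding QMax_def using qE B(2) by blast
  qed
qed

end


theorem theorem2p3:
  fixes D :: "'k::field set" and st :: "'k set \<Rightarrow> 'k set"
  assumes "subring_of D" and "is_quotient_field_of D" and "semistar D st"
  shows "QMax (D1 D) (bracket_star D st) =
           {Q \<in> Spec (D1 D). contr D Q = {0} \<and> star_f D st (content_ideal D Q) = st D}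
           \<union> {extX P | P. P \<in> QMax D (star_f D st)}"
proof -
  interpret ssr D st using assms(1,3) by unfold_locales
  show ?thesis using main[OF assms(2)] .
qed

end
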